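(* Let $n\ge 1$ and let $K$ be the Kasteleyn matrix of the uniformly weighted Aztec diamond of size $n$, i.e. for $x\in\mathtt{B}$, $y\in\mathtt{W}$, $$K(x,y)=\begin{cases}1 & x-y=\pm e_1,\\ \mathrm{i} & x-y=\pm e_2,\\ 0&\text{otherwise.}\end{cases}$$ Let $G_n(\mathtt{w},\mathtt{b})=\sum_{x\in\mathtt{W},\,y\in\mathtt{B}} K^{-1}(x,y)\,w_1^{x_1}w_2^{x_2}b_1^{y_1}b_2^{y_2}$. Then $$\begin{aligned}G_n(\mathtt{w},\mathtt{b})=&\ \frac{w_1w_2^2b_2\,f_{n+1}(w_1^2b_1^2)\,f_n(w_2^2b_2^2)}{C(w_1,w_2)}\\ &+(1+\mathrm{i}w_1^2)\frac{(1+\mathrm{i}b_2^2)F^{0,0}_n+b_1^2\big(b_2w_1f_n(b_1^2w_1^2)+(\mathrm{i}+b_2^2)F^{0,1}_n\big)}{C(w_1,w_2)C(b_1,b_2)}\\ &+(\mathrm{i}+w_1^2)w_2^2\frac{b_1^2b_2^{2n+1}w_1w_2^{2n}f_n(b_1^2w_1^2)+(1+\mathrm{i}b_2^2)F^{1,0}_n+b_1^2(\mathrm{i}+b_2^2)F^{1,1}_n}{C(w_1,w_2)C(b_1,b_2)},\end{aligned}$$ where $C(r_1,r_2)=1+r_1^2r_2^2+\mathrm{i}(r_1^2+r_2^2)$ and $F^{k,l}_n=F^{k,l}_n(\mathtt{w},\mathtt{b})$ are as defined in the context.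
   Context: $\mathrm{i}=\sqrt{-1}$. Aztec diamond of size $n$ (Kasteleyn coordinates): white vertices $\mathtt{W}=\{(x_1,x_2): x_1\text{ odd},\ x_2\text{ even},\ 1\le x_1\le 2n-1,\ 0\le x_2\le 2n\}$, black vertices $\mathtt{B}=\{(x_1,x_2): x_1\text{ even},\ x_2\text{ odd},\ 0\le x_1\le 2n,\ 1\le x_2\le 2n-1\}$, $e_1=(1,1)$, $e_2=(-1,1)$; a black vertex $x$ and a white vertex $y$ are adjacent iff $x-y\in\{\pm e_1,\pm e_2\}$. $K$ has rows indexed by $\mathtt{B}$ and columns by $\mathtt{W}$, so $K^{-1}$ is indexed by $\mathtt{W}\times\mathtt{B}$. $\mathtt{w}=(w_1,w_2)$, $\mathtt{b}=(b_1,b_2)$ are formal variables. $f_n(t)=(1-t^n)/(1-t)=1+t+\dots+t^{n-1}$. Define $F_n(w,b)=-\frac{\mathrm{i}}{2}f_n\!\left(\frac{(1+b\mathrm{i})(1+w\mathrm{i})}{2}\right)$ and $F^{0,0}_n(\mathtt{w},\mathtt{b})=F_n(w_1^2,b_2^2)w_1b_2$, $F^{0,1}_n(\mathtt{w},\mathtt{b})=F_n(-1/w_1^2,-b_2^2)w_1^{2n-1}b_1^{2n}b_2\mathrm{i}$, $F^{1,0}_n(\mathtt{w},\mathtt{b})=F_n(-w_1^2,-1/b_2^2)w_1w_2^{2n}b_2^{2n-1}\mathrm{i}$, $F^{1,1}_n(\mathtt{w},\mathtt{b})=F_n(1/w_1^2,1/b_2^2)w_1^{2n-1}w_2^{2n}b_1^{2n}b_2^{2n-1}$.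 *)

theory Defs
  imports Complex_Main
begin

text \<open>Vertices of the Aztec diamond of size n (Kasteleyn coordinates); all coordinates are
  nonnegative, so we use pairs of naturals.\<close>

definition Wset :: "nat \<Rightarrow> (nat \<times> nat) set" where
  "Wset n = {(x1, x2). odd x1 \<and> even x2 \<and> 1 \<le> x1 \<and> x1 \<le> 2*n - 1 \<and> x2 \<le> 2*n}"

definition Bset :: "nat \<Rightarrow> (nat \<times> nat) set" where
  "Bset n = {(x1, x2). even x1 \<and> odd x2 \<and> x1 \<le> 2*n \<and> 1 \<le> x2 \<and> x2 \<le> 2*n - 1}"

text \<open>Kasteleyn matrix, rows indexed by black, columns by white vertices.
  e1 = (1,1), e2 = (-1,1).\<close>

definition Kast :: "nat \<Rightarrow> nat \<times> nat \<Rightarrow> nat \<times> nat \<Rightarrow> complex" where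
  "Kast n x y =
    (if x \<in> Bset n \<and> y \<in> Wset n then
       (let d = (int (fst x) - int (fst y), int (snd x) - int (snd y)) in
        if d = (1, 1) \<or> d = (-1, -1) then 1
        else if d = (-1, 1) \<or> d = (1, -1) then \<i>
        else 0)
     else 0)"

definition is_Kinv :: "nat \<Rightarrow> (nat \<times> nat \<Rightarrow> nat \<times> nat \<Rightarrow> complex) \<Rightarrow> bool" where
  "is_Kinv n G \<longleftrightarrow>
     (\<forall>y x. \<not> (y \<in> Wset n \<and> x \<in> Bset n) \<longrightarrow> G y x = 0) \<and>
     (\<forall>x\<in>Bset n. \<forall>z\<in>Bset n. (\<Sum>y\<in>Wset n. Kast n x y * G y z) = (if x = z then 1 else 0)) \<and>
     (\<forall>y\<in>Wset n. \<forall>y'\<in>Wset n. (\<Sum>x\<in>Bset n. G y x * Kast n x y') = (if y = y' then 1 else 0))"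

definition Kinv :: "nat \<Rightarrow> nat \<times> nat \<Rightarrow> nat \<times> nat \<Rightarrow> complex" where
  "Kinv n = (THE G. is_Kinv n G)"

definition Gen :: "nat \<Rightarrow> complex \<Rightarrow> complex \<Rightarrow> complex \<Rightarrow> complex \<Rightarrow> complex" where
  "Gen n w1 w2 b1 b2 =
     (\<Sum>x\<in>Wset n. \<Sum>y\<in>Bset n.
        Kinv n x y * w1 ^ fst x * w2 ^ snd x * b1 ^ fst y * b2 ^ snd y)"

definition fpoly :: "nat \<Rightarrow> complex \<Rightarrow> complex" where
  "fpoly n t = (\<Sum>k<n. t ^ k)"

definition Fn :: "nat \<Rightarrow> complex \<Rightarrow> complex \<Rightarrow> complex" where
  "Fn n w b = - (\<i> / 2) * fpoly n ((1 + b * \<i>) * (1 + w * \<i>) / 2)"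

definition F00 :: "nat \<Rightarrow> complex \<Rightarrow> complex \<Rightarrow> complex \<Rightarrow> complex \<Rightarrow> complex" where
  "F00 n w1 w2 b1 b2 = Fn n (w1^2) (b2^2) * w1 * b2"

definition F01 :: "nat \<Rightarrow> complex \<Rightarrow> complex \<Rightarrow> complex \<Rightarrow> complex \<Rightarrow> complex" where
  "F01 n w1 w2 b1 b2 = Fn n (-1 / w1^2) (- (b2^2)) * w1^(2*n-1) * b1^(2*n) * b2 * \<i>"

definition F10 :: "nat \<Rightarrow> complex \<Rightarrow> complex \<Rightarrow> complex \<Rightarrow> complex \<Rightarrow> complex" where
  "F10 n w1 w2 b1 b2 = Fn n (- (w1^2)) (-1 / b2^2) * w1 * w2^(2*n) * b2^(2*n-1) * \<i>"

definition F11 :: "nat \<Rightarrow> complex \<Rightarrow> complex \<Rightarrow> complex \<Rightarrow> complex \<Rightarrow> complex" where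
  "F11 n w1 w2 b1 b2 = Fn n (1 / w1^2) (1 / b2^2) * w1^(2*n-1) * w2^(2*n) * b1^(2*n) * b2^(2*n-1)"

definition Cpoly :: "complex \<Rightarrow> complex \<Rightarrow> complex" where
  "Cpoly r1 r2 = 1 + r1^2 * r2^2 + \<i> * (r1^2 + r2^2)"

end

theory Submission
  imports Defs "HOL-Computational_Algebra.Polynomial" "Jordan_Normal_Form.Determinant"
begin


definition Kf :: "nat \<Rightarrow> nat \<Rightarrow> nat \<Rightarrow> nat \<Rightarrow> complex" where
 "Kf a c j k = (if a = Suc j \<and> c = k then 1 else 0) + (if a = j \<and> k = Suc c then 1 else 0)
    + (if a = j \<and> c = k then \<i> else 0) + (if a = Suc j \<and> k = Suc c then \<i> else 0)"

definition Cq :: "complex \<Rightarrow> complex \<Rightarrow> complex" where "Cq x y = 1 + x*y + \<i>*(x+y)"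

lemma Kast_idx:
  assumes "a \<le> n" "c < n" "j < n" "k \<le> n"
  shows "Kast n (2*a, 2*c+1) (2*j+1, 2*k) = Kf a c j k"
  using assms by (auto simp: Kast_def Wset_def Bset_def Kf_def)

lemma Wset_img: "Wset n = (\<lambda>(j,k). (2*j+1, 2*k)) ` ({..<n} \<times> {..<Suc n})"
proof (rule Set.set_eqI, rule iffI)
  fix y assume "y \<in> Wset n"
  then obtain x1 x2 where y: "y = (x1,x2)" "odd x1" "even x2" "1 \<le> x1" "x1 \<le> 2*n-1" "x2 \<le> 2*n"
    by (auto simp: Wset_def)
  then have "x1 = 2*(x1 div 2)+1" "x2 = 2*(x2 div 2)" "x1 div 2 < n" "x2 div 2 < Suc n" by auto
  then show "y \<in> (\<lambda>(j,k). (2*j+1, 2*k)) ` ({..<n} \<times> {..<Suc n})"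
    using y(1) by (intro image_eqI[of _ _ "(x1 div 2, x2 div 2)"]) auto
qed (auto simp: Wset_def)

lemma Bset_img: "Bset n = (\<lambda>(a,c). (2*a, 2*c+1)) ` ({..<Suc n} \<times> {..<n})"
proof (rule Set.set_eqI, rule iffI)
  fix y assume "y \<in> Bset n"
  then obtain x1 x2 where y: "y = (x1,x2)" "even x1" "odd x2" "x1 \<le> 2*n" "1 \<le> x2" "x2 \<le> 2*n-1"
    by (auto simp: Bset_def)
  then have "x1 = 2*(x1 div 2)" "x2 = 2*(x2 div 2)+1" "x1 div 2 < Suc n" "x2 div 2 < n" by auto
  then show "y \<in> (\<lambda>(a,c). (2*a, 2*c+1)) ` ({..<Suc n} \<times> {..<n})"
    using y(1) by (intro image_eqI[of _ _ "(x1 div 2, x2 div 2)"]) auto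
qed (auto simp: Bset_def)

lemma sum_Wset: "(\<Sum>y\<in>Wset n. f y) = (\<Sum>j<n. \<Sum>k<Suc n. f (2*j+1, 2*k))"
proof -
  have inj: "inj_on (\<lambda>(j,k). (2*j+1, 2*k::nat)) ({..<n} \<times> {..<Suc n})"
    by (auto simp: inj_on_def)
  show ?thesis unfolding Wset_img sum.reindex[OF inj] sum.cartesian_product
    by (simp add: comp_def case_prod_beta)
qed

lemma sum_Bset: "(\<Sum>y\<in>Bset n. f y) = (\<Sum>a<Suc n. \<Sum>c<n. f (2*a, 2*c+1))"
proof -
  have inj: "inj_on (\<lambda>(a,c). (2*a, 2*c+1::nat)) ({..<Suc n} \<times> {..<n})"
    by (auto simp: inj_on_def)
  show ?thesis unfolding Bset_img sum.reindex[OF inj]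
    by (simp add: sum.cartesian_product case_prod_beta del: lessThan_Suc)
qed

lemma delta2: "(\<Sum>j<(n::nat). \<Sum>k<(m::nat). (if j = J \<and> k = K then x else 0) * g j k :: complex) = (if J < n \<and> K < m then x * g J K else 0)"
proof -
  have e: "(if P then x else 0) * y = (if P then x * y else 0)" for P and y :: complex by simp
  have "(\<Sum>j<n. \<Sum>k<m. (if j = J \<and> k = K then x else 0) * g j k) = (\<Sum>j<n. if j = J then (if K < m then x * g j K else 0) else 0)"
  proof (rule sum.cong)
    fix j assume "j \<in> {..<n}"
    show "(\<Sum>k<m. (if j = J \<and> k = K then x else 0) * g j k) = (if j = J then (if K < m then x * g j K else 0) else 0)"
      unfolding e by (cases "j = J") (simp_all add: sum.delta sum.delta')
  qed simp
  also have "\<dots> = (if J < n \<and> K < m then x * g J K else 0)" by (simp add: sum.delta')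
  finally show ?thesis .
qed

lemma Kf_alt: "Kf a c j k = (if j = a - 1 \<and> k = c then (if 0 < a then 1 else 0) else 0) + (if j = a \<and> k = Suc c then 1 else 0)
   + (if j = a \<and> k = c then \<i> else 0) + (if j = a - 1 \<and> k = Suc c then (if 0 < a then \<i> else 0) else 0)"
  by (auto simp: Kf_def)

lemma innerA:
  assumes "a \<le> n" "c < n" "1 \<le> n"
  shows "p * (\<Sum>j<n. \<Sum>k<Suc n. Kf a c j k * p^j * q^k) = p^a*q^c*Cq p q - (if a = 0 then (1+\<i>*q)*q^c else 0) - (if a = n then p^(Suc n)*(q+\<i>)*q^c else 0)"
proof -
  have "(\<Sum>j<n. \<Sum>k<Suc n. Kf a c j k * p^j * q^k) = (\<Sum>j<n. \<Sum>k<Suc n. Kf a c j k * (p^j * q^k))"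
    by (simp add: mult.assoc)
  also have "\<dots> = (if a - 1 < n then (if 0 < a then 1 else 0) * (p^(a-1) * q^c) else 0) + (if a < n then p^a*q^(Suc c) else 0)
     + (if a < n then \<i> * (p^a*q^c) else 0) + (if a - 1 < n then (if 0 < a then \<i> else 0) * (p^(a-1) * q^(Suc c)) else 0)"
    unfolding Kf_alt distrib_right sum.distrib delta2 using assms by simp
  finally have S: "(\<Sum>j<n. \<Sum>k<Suc n. Kf a c j k * p^j * q^k) = \<dots>" .
  consider "a = 0" | "0 < a" "a < n" | "a = n" using assms by linarith
  then show ?thesis
  proof cases
    case 1
    then have "p * (\<Sum>j<n. \<Sum>k<Suc n. Kf a c j k * p^j * q^k) = p*q^(Suc c) + \<i>*(p*q^c)"
      using assms unfolding S by (simp add: algebra_simps)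
    then show ?thesis using 1 assms unfolding Cq_def by (simp add: algebra_simps)
  next
    case 2
    then have pa: "p * p^(a-1) = p^a" by (cases a) simp_all
    have "p * (\<Sum>j<n. \<Sum>k<Suc n. Kf a c j k * p^j * q^k) = p * (p^(a-1) * q^c + p^a*q^(Suc c) + \<i> * (p^a*q^c) + \<i> * (p^(a-1) * q^(Suc c)))"
      unfolding S using 2 by (simp add: less_imp_diff_less)
    also have "\<dots> = (p * p^(a-1)) * q^c + p * p^a*q^(Suc c) + \<i> * (p * p^a*q^c) + \<i> * ((p * p^(a-1)) * q^(Suc c))"
      by (simp add: algebra_simps)
    also have "\<dots> = p^a*q^c*Cq p q"
      unfolding pa Cq_def by (simp add: algebra_simps)
    finally show ?thesis using 2 by simp
  next
    case 3
    then have pa: "p * p^(a-1) = p^a" using assms by (cases a) auto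
    have "p * (\<Sum>j<n. \<Sum>k<Suc n. Kf a c j k * p^j * q^k) = p * (p^(a-1) * q^c + \<i> * (p^(a-1) * q^(Suc c)))"
      unfolding S using 3 assms by simp
    also have "\<dots> = (p * p^(a-1)) * q^c + \<i> * ((p * p^(a-1)) * q^(Suc c))"
      by (simp add: algebra_simps)
    also have "\<dots> = p^a*q^c*Cq p q - p^(Suc n)*(q+\<i>)*q^c"
      unfolding pa Cq_def using 3 by (simp add: algebra_simps)
    finally show ?thesis using 3 assms by simp
  qed
qed

lemma swap4: "(\<Sum>j\<in>A. \<Sum>k\<in>B. \<Sum>a\<in>C. \<Sum>c\<in>D. f j k a c) = (\<Sum>a\<in>C. \<Sum>c\<in>D. \<Sum>j\<in>A. \<Sum>k\<in>B. f j k a c)"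
proof -
  have "(\<Sum>j\<in>A. \<Sum>k\<in>B. \<Sum>a\<in>C. \<Sum>c\<in>D. f j k a c) = (\<Sum>j\<in>A. \<Sum>a\<in>C. \<Sum>k\<in>B. \<Sum>c\<in>D. f j k a c)"
    by (rule sum.cong[OF refl]) (rule sum.swap)
  also have "\<dots> = (\<Sum>a\<in>C. \<Sum>j\<in>A. \<Sum>k\<in>B. \<Sum>c\<in>D. f j k a c)" by (rule sum.swap)
  also have "\<dots> = (\<Sum>a\<in>C. \<Sum>j\<in>A. \<Sum>c\<in>D. \<Sum>k\<in>B. f j k a c)"
    by (intro sum.cong refl sum.swap)
  also have "\<dots> = (\<Sum>a\<in>C. \<Sum>c\<in>D. \<Sum>j\<in>A. \<Sum>k\<in>B. f j k a c)"
    by (intro sum.cong refl sum.swap)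
  finally show ?thesis .
qed

lemma sum_if_const: "(\<Sum>c\<in>D. if P then g c else 0) = (if P then \<Sum>c\<in>D. g c else 0)"
  by simp

lemma genA:
  assumes "1 \<le> n"
  shows "p * (\<Sum>j<n. \<Sum>k<Suc n. (\<Sum>a<Suc n. \<Sum>c<n. v a c * Kf a c j k) * p^j * q^k)
    = (\<Sum>a<Suc n. \<Sum>c<n. v a c * p^a * q^c) * Cq p q - (1+\<i>*q)*(\<Sum>c<n. v 0 c * q^c)
      - p^(Suc n)*(q+\<i>)*(\<Sum>c<n. v n c * q^c)"
proof -
  have "p * (\<Sum>j<n. \<Sum>k<Suc n. (\<Sum>a<Suc n. \<Sum>c<n. v a c * Kf a c j k) * p^j * q^k)
      = (\<Sum>j<n. \<Sum>k<Suc n. \<Sum>a<Suc n. \<Sum>c<n. v a c * (p * (Kf a c j k * p^j * q^k)))"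
    by (simp add: sum_distrib_left sum_distrib_right mult_ac del: sum.lessThan_Suc)
  also have "\<dots> = (\<Sum>a<Suc n. \<Sum>c<n. \<Sum>j<n. \<Sum>k<Suc n. v a c * (p * (Kf a c j k * p^j * q^k)))"
    by (rule swap4)
  also have "\<dots> = (\<Sum>a<Suc n. \<Sum>c<n. v a c * (p * (\<Sum>j<n. \<Sum>k<Suc n. Kf a c j k * p^j * q^k)))"
    by (simp add: sum_distrib_left del: sum.lessThan_Suc)
  also have "\<dots> = (\<Sum>a<Suc n. \<Sum>c<n. v a c * (p^a*q^c*Cq p q - (if a = 0 then (1+\<i>*q)*q^c else 0) - (if a = n then p^(Suc n)*(q+\<i>)*q^c else 0)))"
    using assms by (intro sum.cong refl) (simp add: innerA del: sum.lessThan_Suc)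
  also have "\<dots> = (\<Sum>a<Suc n. \<Sum>c<n. v a c * p^a*q^c*Cq p q) - (\<Sum>a<Suc n. if a = 0 then (\<Sum>c<n. v a c * ((1+\<i>*q)*q^c)) else 0)
       - (\<Sum>a<Suc n. if a = n then (\<Sum>c<n. v a c * (p^(Suc n)*(q+\<i>)*q^c)) else 0)"
  proof -
    have "(\<Sum>a<Suc n. \<Sum>c<n. v a c * (p^a*q^c*Cq p q - (if a = 0 then (1+\<i>*q)*q^c else 0) - (if a = n then p^(Suc n)*(q+\<i>)*q^c else 0)))
      = (\<Sum>a<Suc n. \<Sum>c<n. v a c * p^a*q^c*Cq p q - (if a = 0 then v a c * ((1+\<i>*q)*q^c) else 0) - (if a = n then v a c * (p^(Suc n)*(q+\<i>)*q^c) else 0))"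
      by (intro sum.cong refl) (simp add: algebra_simps)
    also have "\<dots> = (\<Sum>a<Suc n. \<Sum>c<n. v a c * p^a*q^c*Cq p q) - (\<Sum>a<Suc n. \<Sum>c<n. if a = 0 then v a c * ((1+\<i>*q)*q^c) else 0)
       - (\<Sum>a<Suc n. \<Sum>c<n. if a = n then v a c * (p^(Suc n)*(q+\<i>)*q^c) else 0)"
      by (simp only: sum_subtractf)
    also have "\<dots> = (\<Sum>a<Suc n. \<Sum>c<n. v a c * p^a*q^c*Cq p q) - (\<Sum>a<Suc n. if a = 0 then (\<Sum>c<n. v a c * ((1+\<i>*q)*q^c)) else 0)
       - (\<Sum>a<Suc n. if a = n then (\<Sum>c<n. v a c * (p^(Suc n)*(q+\<i>)*q^c)) else 0)"
      by (simp only: sum_if_const)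
    finally show ?thesis .
  qed
  also have "\<dots> = (\<Sum>a<Suc n. \<Sum>c<n. v a c * p^a * q^c) * Cq p q - (1+\<i>*q)*(\<Sum>c<n. v 0 c * q^c)
      - p^(Suc n)*(q+\<i>)*(\<Sum>c<n. v n c * q^c)"
    by (simp add: sum.delta sum_distrib_left sum_distrib_right mult_ac del: sum.lessThan_Suc)
  finally show ?thesis .
qed

lemma Kf_alt2: "Kf a c j k = (if a = Suc j \<and> c = k then 1 else 0) + (if a = j \<and> c = k - 1 then (if 0 < k then 1 else 0) else 0)
   + (if a = j \<and> c = k then \<i> else 0) + (if a = Suc j \<and> c = k - 1 then (if 0 < k then \<i> else 0) else 0)"
  by (auto simp: Kf_def)

lemma innerB:
  assumes "j < n" "k \<le> n" "1 \<le> n"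
  shows "g * (\<Sum>a<Suc n. \<Sum>c<n. Kf a c j k * x^a * g^c) = x^j*g^k*Cq x g - (if k = 0 then (1+\<i>*x)*x^j else 0) - (if k = n then g^(Suc n)*(x+\<i>)*x^j else 0)"
proof -
  have "(\<Sum>a<Suc n. \<Sum>c<n. Kf a c j k * x^a * g^c) = (\<Sum>a<Suc n. \<Sum>c<n. Kf a c j k * (x^a * g^c))"
    by (simp add: mult.assoc del: sum.lessThan_Suc)
  also have "\<dots> = (if Suc j < Suc n \<and> k < n then 1 * (x^(Suc j) * g^k) else 0) + (if j < Suc n \<and> k - 1 < n then (if 0 < k then 1 else 0) * (x^j * g^(k-1)) else 0)
     + (if j < Suc n \<and> k < n then \<i> * (x^j*g^k) else 0) + (if Suc j < Suc n \<and> k - 1 < n then (if 0 < k then \<i> else 0) * (x^(Suc j) * g^(k-1)) else 0)"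
    unfolding Kf_alt2 distrib_right sum.distrib delta2 by simp
  finally have S: "(\<Sum>a<Suc n. \<Sum>c<n. Kf a c j k * x^a * g^c) = \<dots>" .
  consider "k = 0" | "0 < k" "k < n" | "k = n" using assms by linarith
  then show ?thesis
  proof cases
    case 1
    then have "g * (\<Sum>a<Suc n. \<Sum>c<n. Kf a c j k * x^a * g^c) = g*x^(Suc j) + \<i>*(g*x^j)"
      using assms unfolding S by (simp add: algebra_simps)
    then show ?thesis using 1 assms unfolding Cq_def by (simp add: algebra_simps)
  next
    case 2
    then have pa: "g * g^(k-1) = g^k" by (cases k) simp_all
    have "g * (\<Sum>a<Suc n. \<Sum>c<n. Kf a c j k * x^a * g^c) = g * (x^(Suc j) * g^k + x^j * g^(k-1) + \<i> * (x^j*g^k) + \<i> * (x^(Suc j) * g^(k-1)))"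
      unfolding S using 2 assms by (simp add: less_imp_diff_less)
    also have "\<dots> = g * x^(Suc j) * g^k + x^j * (g * g^(k-1)) + \<i> * (g * x^j*g^k) + \<i> * (x^(Suc j) * (g * g^(k-1)))"
      by (simp add: algebra_simps)
    also have "\<dots> = x^j*g^k*Cq x g"
      unfolding pa Cq_def by (simp add: algebra_simps)
    finally show ?thesis using 2 by simp
  next
    case 3
    then have pa: "g * g^(k-1) = g^k" using assms by (cases k) auto
    have "g * (\<Sum>a<Suc n. \<Sum>c<n. Kf a c j k * x^a * g^c) = g * (x^j * g^(k-1) + \<i> * (x^(Suc j) * g^(k-1)))"
      unfolding S using 3 assms by simp
    also have "\<dots> = x^j * (g * g^(k-1)) + \<i> * (x^(Suc j) * (g * g^(k-1)))"
      by (simp add: algebra_simps)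
    also have "\<dots> = x^j*g^k*Cq x g - g^(Suc n)*(x+\<i>)*x^j"
      unfolding pa Cq_def using 3 by (simp add: algebra_simps)
    finally show ?thesis using 3 assms by simp
  qed
qed

lemma genB:
  assumes "1 \<le> n"
  shows "g * (\<Sum>a<Suc n. \<Sum>c<n. (\<Sum>j<n. \<Sum>k<Suc n. Kf a c j k * u j k) * x^a * g^c)
    = (\<Sum>j<n. \<Sum>k<Suc n. u j k * x^j * g^k) * Cq x g - (1+\<i>*x)*(\<Sum>j<n. u j 0 * x^j)
      - g^(Suc n)*(x+\<i>)*(\<Sum>j<n. u j n * x^j)"
proof -
  have "g * (\<Sum>a<Suc n. \<Sum>c<n. (\<Sum>j<n. \<Sum>k<Suc n. Kf a c j k * u j k) * x^a * g^c)
      = (\<Sum>a<Suc n. \<Sum>c<n. \<Sum>j<n. \<Sum>k<Suc n. u j k * (g * (Kf a c j k * x^a * g^c)))"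
    by (simp add: sum_distrib_left sum_distrib_right mult_ac del: sum.lessThan_Suc)
  also have "\<dots> = (\<Sum>j<n. \<Sum>k<Suc n. \<Sum>a<Suc n. \<Sum>c<n. u j k * (g * (Kf a c j k * x^a * g^c)))"
    by (rule swap4)
  also have "\<dots> = (\<Sum>j<n. \<Sum>k<Suc n. u j k * (g * (\<Sum>a<Suc n. \<Sum>c<n. Kf a c j k * x^a * g^c)))"
    by (simp add: sum_distrib_left del: sum.lessThan_Suc)
  also have "\<dots> = (\<Sum>j<n. \<Sum>k<Suc n. u j k * (x^j*g^k*Cq x g - (if k = 0 then (1+\<i>*x)*x^j else 0) - (if k = n then g^(Suc n)*(x+\<i>)*x^j else 0)))"
    using assms by (intro sum.cong refl) (simp add: innerB del: sum.lessThan_Suc)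
  also have "\<dots> = (\<Sum>j<n. \<Sum>k<Suc n. u j k * x^j*g^k*Cq x g) - (\<Sum>j<n. \<Sum>k<Suc n. if k = 0 then u j k * ((1+\<i>*x)*x^j) else 0)
       - (\<Sum>j<n. \<Sum>k<Suc n. if k = n then u j k * (g^(Suc n)*(x+\<i>)*x^j) else 0)"
  proof -
    have "(\<Sum>j<n. \<Sum>k<Suc n. u j k * (x^j*g^k*Cq x g - (if k = 0 then (1+\<i>*x)*x^j else 0) - (if k = n then g^(Suc n)*(x+\<i>)*x^j else 0)))
      = (\<Sum>j<n. \<Sum>k<Suc n. u j k * x^j*g^k*Cq x g - (if k = 0 then u j k * ((1+\<i>*x)*x^j) else 0) - (if k = n then u j k * (g^(Suc n)*(x+\<i>)*x^j) else 0))"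
      by (intro sum.cong refl) (simp add: algebra_simps)
    then show ?thesis by (simp only: sum_subtractf)
  qed
  also have "\<dots> = (\<Sum>j<n. \<Sum>k<Suc n. u j k * x^j * g^k) * Cq x g - (1+\<i>*x)*(\<Sum>j<n. u j 0 * x^j)
      - g^(Suc n)*(x+\<i>)*(\<Sum>j<n. u j n * x^j)"
    by (simp add: sum.delta sum.delta' sum_distrib_left sum_distrib_right mult_ac del: sum.lessThan_Suc)
  finally show ?thesis .
qed



lemma fpoly_closed: "t \<noteq> 1 \<Longrightarrow> fpoly n t = (1 - t^n) / (1 - t)"
  unfolding fpoly_def using sum_gp_strict[of t n] by simp

lemma fp_mul: "(1 - t) * fpoly n t = 1 - t^n"
proof (induction n)
  case (Suc n)
  have "fpoly (Suc n) t = fpoly n t + t^n" by (simp add: fpoly_def)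
  then have "(1-t)*fpoly (Suc n) t = (1-t)*fpoly n t + t^n - t^Suc n" by (simp add: algebra_simps)
  then show ?case using Suc.IH by simp
qed (simp add: fpoly_def)

lemma mul_inv_eq: "(a::complex) * z = 1 \<Longrightarrow> a * F = Y \<Longrightarrow> F = z * Y"
  by (metis mult.assoc mult.commute mult_1)

lemma E0_aux: fixes q \<alpha> m :: complex
  assumes hm: "m * (q + \<i> + \<alpha> + \<i>*\<alpha>*q) = 1"
  shows "(1 - (1 + q*\<i>)*(1 + \<alpha>*\<i>)/2) * (2*\<i>*m) = 1"
proof -
  have "(1 - (1 + q*\<i>)*(1 + \<alpha>*\<i>)/2) * (2*\<i>*m) = m * (q + \<i> + \<alpha> + \<i>*\<alpha>*q)"
    by (simp add: field_simps)
  then show ?thesis using hm by simp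
qed

lemma E1_aux: fixes q \<alpha> m ai :: complex
  assumes hm: "m * (q + \<i> + \<alpha> + \<i>*\<alpha>*q) = 1" and ha: "\<alpha> * ai = 1"
  shows "(1 - (1 + (-q)*\<i>)*(1 + (-ai)*\<i>)/2) * (2*\<alpha>*m) = 1"
proof -
  have f: "\<alpha>*(1 + (-ai)*\<i>) = \<alpha> - \<i>" using ha by (simp add: algebra_simps)
  have "(1 - (1 + (-q)*\<i>)*(1 + (-ai)*\<i>)/2) * (2*\<alpha>*m) = m * (2*\<alpha> - (1 + (-q)*\<i>)*(\<alpha>*(1 + (-ai)*\<i>)))"
    by (simp add: field_simps)
  also have "\<dots> = m * (q + \<i> + \<alpha> + \<i>*\<alpha>*q)" unfolding f by (simp add: algebra_simps)
  finally show ?thesis using hm by simp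
qed

lemma Eu_aux: fixes q \<alpha> m r :: complex
  assumes hm: "m * (q + \<i> + \<alpha> + \<i>*\<alpha>*q) = 1" and hr: "r * (q+\<i>) = 1"
  shows "(1 - \<alpha>*(-(1+\<i>*q)*r)) * ((q+\<i>)*m) = 1"
proof -
  have "(1 - \<alpha>*(-(1+\<i>*q)*r)) * ((q+\<i>)*m) = m * ((q+\<i>) + \<alpha>*(1+\<i>*q)*(r*(q+\<i>)))"
    by (simp add: algebra_simps)
  also have "\<dots> = m * (q + \<i> + \<alpha> + \<i>*\<alpha>*q)" unfolding hr by (simp add: algebra_simps)
  finally show ?thesis using hm by simp
qed

lemma auxb: fixes m \<alpha> ai r q X U :: complex
  assumes ha: "\<alpha> * ai = 1" and hr: "r * (q+\<i>) = 1"
  shows "-(\<i>/2) * (2*\<i>*m*(1 - X)) + (\<i>*\<i>/2) * (2*\<alpha>*m*(U*ai - X*ai)) = (q+\<i>)*m*(1 - U) * r"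
proof -
  have "-(\<i>/2) * (2*\<i>*m*(1 - X)) + (\<i>*\<i>/2) * (2*\<alpha>*m*(U*ai - X*ai)) = m*(1-X) - (\<alpha>*ai)*m*(U - X)"
    by (simp add: algebra_simps)
  also have "\<dots> = m*(1-U)" unfolding ha by (simp add: algebra_simps)
  also have "\<dots> = m*(1-U)*(r*(q+\<i>))" unfolding hr by simp
  finally show ?thesis by (simp add: mult_ac)
qed

lemma E2_aux: fixes q \<alpha> m qv :: complex
  assumes hm: "m * (q + \<i> + \<alpha> + \<i>*\<alpha>*q) = 1" and hq: "q * qv = 1"
  shows "(1 - (1 + (-qv)*\<i>)*(1 + (-\<alpha>)*\<i>)/2) * (2*q*m) = 1"
proof -
  have f: "q*(1 + (-qv)*\<i>) = q - \<i>" using hq by (simp add: algebra_simps)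
  have "(1 - (1 + (-qv)*\<i>)*(1 + (-\<alpha>)*\<i>)/2) * (2*q*m) = m * (2*q - (q*(1 + (-qv)*\<i>))*(1 + (-\<alpha>)*\<i>))"
    by (simp add: field_simps)
  also have "\<dots> = m * (q + \<i> + \<alpha> + \<i>*\<alpha>*q)" unfolding f by (simp add: algebra_simps)
  finally show ?thesis using hm by simp
qed

lemma E3_aux: fixes q \<alpha> m qv ai :: complex
  assumes hm: "m * (q + \<i> + \<alpha> + \<i>*\<alpha>*q) = 1" and hq: "q * qv = 1" and ha: "\<alpha> * ai = 1"
  shows "(1 - (1 + qv*\<i>)*(1 + ai*\<i>)/2) * (2*\<i>*q*\<alpha>*m) = 1"
proof -
  have f1: "q*(1 + qv*\<i>) = q + \<i>" using hq by (simp add: algebra_simps)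
  have f2: "\<alpha>*(1 + ai*\<i>) = \<alpha> + \<i>" using ha by (simp add: algebra_simps)
  have "(1 - (1 + qv*\<i>)*(1 + ai*\<i>)/2) * (2*\<i>*q*\<alpha>*m) = m * \<i> * (2*q*\<alpha> - (q*(1 + qv*\<i>))*(\<alpha>*(1 + ai*\<i>)))"
    by (simp add: field_simps)
  also have "\<dots> = m * (q + \<i> + \<alpha> + \<i>*\<alpha>*q)" unfolding f1 f2 by (simp add: algebra_simps)
  finally show ?thesis using hm by simp
qed

lemma auxt: fixes m \<alpha> ai r q X U Q :: complex
  assumes ha: "\<alpha> * ai = 1" and hr: "r * (q+\<i>) = 1"
  shows "\<i>*(-(\<i>/2))*Q*(2*m*(1 - X)) - (-(\<i>/2))*(2*\<i>*\<alpha>*m)*Q*(U*ai - X*ai) = Q * ((q+\<i>)*m*(1 - U)) * r"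
proof -
  have "\<i>*(-(\<i>/2))*Q*(2*m*(1 - X)) - (-(\<i>/2))*(2*\<i>*\<alpha>*m)*Q*(U*ai - X*ai) = Q*m*(1-X) - (\<alpha>*ai)*Q*m*(U - X)"
    by (simp add: algebra_simps)
  also have "\<dots> = Q*m*(1-U)" unfolding ha by (simp add: algebra_simps)
  also have "\<dots> = Q*m*(1-U)*(r*(q+\<i>))" unfolding hr by simp
  finally show ?thesis by (simp add: mult_ac)
qed

lemma hs_aux: fixes x r :: complex assumes hr: "r*(x+\<i>) = 1"
  shows "(-(1+\<i>*x)*r)*(x+\<i>) = -(1+\<i>*x)"
proof -
  have "(-(1+\<i>*x)*r)*(x+\<i>) = -(1+\<i>*x)*(r*(x+\<i>))" by (simp add: mult_ac)
  then show ?thesis using hr by simp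
qed

lemma rel_bot_aux:
  fixes q \<alpha> r ai :: complex
  assumes hr: "r * (q + \<i>) = 1" and ha: "\<alpha> * ai = 1"
  shows "- (1 + \<i> * q) * r * \<alpha> * ((1 + - q * \<i>) * (1 + - ai * \<i>) / 2) = (1 + q * \<i>) * (1 + \<alpha> * \<i>) / 2"
proof -
  have f1: "1 + - q * \<i> = -\<i>*(q+\<i>)" by (simp add: algebra_simps)
  have f2: "\<alpha>*(1 + - ai * \<i>) = \<alpha> - \<i>" using ha by (simp add: algebra_simps)
  have "- (1 + \<i> * q) * r * \<alpha> * ((1 + - q * \<i>) * (1 + - ai * \<i>) / 2) = (-(1+\<i>*q)) * (r*(q+\<i>)) * (-\<i>) * (\<alpha>*(1 + - ai * \<i>)) / 2"
    unfolding f1 by (simp add: mult_ac)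
  also have "\<dots> = (-(1+\<i>*q)) * (-\<i>) * (\<alpha> - \<i>) / 2" unfolding hr f2 by simp
  also have "\<dots> = (1 + q * \<i>) * (1 + \<alpha> * \<i>) / 2" by (simp add: algebra_simps)
  finally show ?thesis .
qed
lemma rel_top_aux:
  fixes q \<alpha> r ai qv :: complex
  assumes hr: "r * (q + \<i>) = 1" and ha: "\<alpha> * ai = 1" and hq: "q * qv = 1"
  shows "- (1 + \<i> * q) * r * \<alpha> * ((1 + qv * \<i>) * (1 + ai * \<i>) / 2) = (1 + - qv * \<i>) * (1 + - \<alpha> * \<i>) / 2"
proof -
  have f1: "\<alpha>*(1 + ai * \<i>) = \<alpha> + \<i>" using ha by (simp add: algebra_simps)
  have "- (1 + \<i> * q) * r * \<alpha> * ((1 + qv * \<i>) * (1 + ai * \<i>) / 2) = (-(1+\<i>*q)) * r * (1 + qv * \<i>) * (\<alpha>*(1 + ai * \<i>)) / 2"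
    by (simp add: mult_ac)
  also have "\<dots> = (-(1+\<i>*q)) * r * (1 + qv * \<i>) * (\<alpha> + \<i>) / 2" unfolding f1 ..
  also have "\<dots> = (1 + - qv * \<i>) * (1 + - \<alpha> * \<i>) / 2"
  proof -
    have g: "(1+\<i>*q)*(1 + qv*\<i>) = \<i>*(q+\<i>)*(1 - qv*\<i>)" using hq by (simp add: algebra_simps)
    have h: "(\<alpha> + \<i>) = \<i>*(1 - \<alpha>*\<i>)" by (simp add: algebra_simps)
    have "(-(1+\<i>*q)) * r * (1 + qv * \<i>) * (\<alpha> + \<i>) / 2 = -((1+\<i>*q)*(1 + qv*\<i>)) * r * (\<alpha> + \<i>) / 2" by (simp add: algebra_simps)
    also have "\<dots> = -(\<i>*\<i>) * (r*(q+\<i>)) * (1 - qv*\<i>) * (1 - \<alpha>*\<i>) / 2" unfolding g h by (simp add: mult_ac)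
    also have "\<dots> = (1 + - qv * \<i>) * (1 + - \<alpha> * \<i>) / 2" unfolding hr by simp
    finally show ?thesis .
  qed
  finally show ?thesis .
qed

lemma cand_bot:
  fixes \<alpha> q :: complex
  assumes n1: "1 \<le> n" and a0: "\<alpha> \<noteq> 0" and qi: "q + \<i> \<noteq> 0" and N0: "q + \<i> + \<alpha> + \<i>*\<alpha>*q \<noteq> 0"
  shows "Fn n \<alpha> q - (-(1+\<i>*q)/(q+\<i>))^n * (\<i>*\<alpha>^(n-1)*Fn n (-1/\<alpha>) (-q))
       = fpoly n (\<alpha>*(-(1+\<i>*q)/(q+\<i>))) / (q+\<i>)"
proof -
  define m where "m = 1/(q + \<i> + \<alpha> + \<i>*\<alpha>*q)"
  define r where "r = 1/(q+\<i>)"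
  define ai where "ai = 1/\<alpha>"
  have hm: "m * (q + \<i> + \<alpha> + \<i>*\<alpha>*q) = 1" using N0 m_def by simp
  have hr: "r * (q+\<i>) = 1" using qi r_def by simp
  have ha: "\<alpha> * ai = 1" using a0 ai_def by simp
  have ii: "\<i>*\<i> = (-1::complex)" by simp
  define s where "s = -(1+\<i>*q)*r"
  define t0 where "t0 = (1 + q*\<i>)*(1 + \<alpha>*\<i>)/2"
  define t1 where "t1 = (1 + (-q)*\<i>)*(1 + (-ai)*\<i>)/2"
  have sdef: "-(1+\<i>*q)/(q+\<i>) = s" unfolding s_def r_def by simp
  have F0: "Fn n \<alpha> q = -(\<i>/2) * fpoly n t0" unfolding Fn_def t0_def by simp
  have F1: "Fn n (-1/\<alpha>) (-q) = -(\<i>/2) * fpoly n t1" unfolding Fn_def t1_def ai_def by simp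
  have rel: "s*\<alpha>*t1 = t0" unfolding s_def t1_def t0_def by (rule rel_bot_aux[OF hr ha])
  have an: "\<alpha>^(n-1) = \<alpha>^n*ai"
    using a0 n1 unfolding ai_def by (cases n) (simp_all add: field_simps)
  have k1: "s^n*\<alpha>^(n-1) = (\<alpha>*s)^n*ai" unfolding an by (simp add: power_mult_distrib)
  have k2: "s^n*\<alpha>^(n-1)*t1^n = t0^n*ai" unfolding an rel[symmetric] by (simp add: power_mult_distrib)
  have E0: "fpoly n t0 = 2*\<i>*m*(1 - t0^n)"
  proof -
    have "(1 - t0) * (2*\<i>*m) = 1" unfolding t0_def by (rule E0_aux[OF hm])
    then show ?thesis using fp_mul[of t0 n] by (rule mul_inv_eq)
  qed
  have E1: "fpoly n t1 = 2*\<alpha>*m*(1 - t1^n)"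
  proof -
    have "(1 - t1) * (2*\<alpha>*m) = 1" unfolding t1_def by (rule E1_aux[OF hm ha])
    then show ?thesis using fp_mul[of t1 n] by (rule mul_inv_eq)
  qed
  have Eu: "fpoly n (\<alpha>*s) = (q+\<i>)*m*(1 - (\<alpha>*s)^n)"
  proof -
    have "(1 - \<alpha>*s) * ((q+\<i>)*m) = 1" unfolding s_def by (rule Eu_aux[OF hm hr])
    then show ?thesis using fp_mul[of "\<alpha>*s" n] by (rule mul_inv_eq)
  qed
  have "Fn n \<alpha> q - s^n * (\<i>*\<alpha>^(n-1)*Fn n (-1/\<alpha>) (-q))
      = -(\<i>/2) * (2*\<i>*m*(1 - t0^n)) + (\<i>*\<i>/2) * (2*\<alpha>*m*(s^n*\<alpha>^(n-1) - s^n*\<alpha>^(n-1)*t1^n))"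
    unfolding F0 F1 E0 E1 by (simp add: algebra_simps)
  also have "\<dots> = -(\<i>/2) * (2*\<i>*m*(1 - t0^n)) + (\<i>*\<i>/2) * (2*\<alpha>*m*((\<alpha>*s)^n*ai - t0^n*ai))"
    using k1 k2 by simp
  also have "\<dots> = fpoly n (\<alpha>*s) * r"
  proof -
    have aux: "-(\<i>/2) * (2*\<i>*m*(1 - X)) + (\<i>*\<i>/2) * (2*\<alpha>*m*(U*ai - X*ai)) = (q+\<i>)*m*(1 - U) * r" for X U
      by (rule auxb[OF ha hr])
    show ?thesis unfolding Eu by (rule aux)
  qed
  finally show ?thesis unfolding sdef r_def by simp
qed

lemma cand_top:
  fixes \<alpha> q :: complex
  assumes n1: "1 \<le> n" and a0: "\<alpha> \<noteq> 0" and q0: "q \<noteq> 0" and qi: "q + \<i> \<noteq> 0" and N0: "q + \<i> + \<alpha> + \<i>*\<alpha>*q \<noteq> 0"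
  shows "\<i>*q^(n-1)*Fn n (-\<alpha>) (-1/q) - (-(1+\<i>*q)/(q+\<i>))^n * (\<alpha>^(n-1)*q^(n-1)*Fn n (1/\<alpha>) (1/q))
       = q^n * fpoly n (\<alpha>*(-(1+\<i>*q)/(q+\<i>))) / (q+\<i>)"
proof -
  define m where "m = 1/(q + \<i> + \<alpha> + \<i>*\<alpha>*q)"
  define r where "r = 1/(q+\<i>)"
  define ai where "ai = 1/\<alpha>"
  define qv where "qv = 1/q"
  have hm: "m * (q + \<i> + \<alpha> + \<i>*\<alpha>*q) = 1" using N0 m_def by simp
  have hr: "r * (q+\<i>) = 1" using qi r_def by simp
  have ha: "\<alpha> * ai = 1" using a0 ai_def by simp
  have hq: "q * qv = 1" using q0 qv_def by simp
  have ii: "\<i>*\<i> = (-1::complex)" by simp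
  define s where "s = -(1+\<i>*q)*r"
  define t2 where "t2 = (1 + (-qv)*\<i>)*(1 + (-\<alpha>)*\<i>)/2"
  define t3 where "t3 = (1 + qv*\<i>)*(1 + ai*\<i>)/2"
  have sdef: "-(1+\<i>*q)/(q+\<i>) = s" unfolding s_def r_def by simp
  have F2: "Fn n (-\<alpha>) (-1/q) = -(\<i>/2) * fpoly n t2" unfolding Fn_def t2_def qv_def by simp
  have F3: "Fn n (1/\<alpha>) (1/q) = -(\<i>/2) * fpoly n t3" unfolding Fn_def t3_def ai_def qv_def by simp
  have rel: "s*\<alpha>*t3 = t2" unfolding s_def t2_def t3_def by (rule rel_top_aux[OF hr ha hq])
  have an: "\<alpha>^(n-1) = \<alpha>^n*ai"
    using a0 n1 unfolding ai_def by (cases n) (simp_all add: field_simps)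
  have qn: "q^(n-1)*q = q^n"
    using n1 by (cases n) (simp_all add: field_simps)
  have k1: "s^n*\<alpha>^(n-1) = (\<alpha>*s)^n*ai" unfolding an by (simp add: power_mult_distrib)
  have k2: "(\<alpha>*s)^n*ai*t3^n = t2^n*ai" unfolding rel[symmetric] by (simp add: power_mult_distrib)
  have E2: "fpoly n t2 = 2*q*m*(1 - t2^n)"
  proof -
    have "(1 - t2) * (2*q*m) = 1" unfolding t2_def by (rule E2_aux[OF hm hq])
    then show ?thesis using fp_mul[of t2 n] by (rule mul_inv_eq)
  qed
  have E3: "fpoly n t3 = 2*\<i>*q*\<alpha>*m*(1 - t3^n)"
  proof -
    have "(1 - t3) * (2*\<i>*q*\<alpha>*m) = 1" unfolding t3_def by (rule E3_aux[OF hm hq ha])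
    then show ?thesis using fp_mul[of t3 n] by (rule mul_inv_eq)
  qed
  have Eu: "fpoly n (\<alpha>*s) = (q+\<i>)*m*(1 - (\<alpha>*s)^n)"
  proof -
    have "(1 - \<alpha>*s) * ((q+\<i>)*m) = 1" unfolding s_def by (rule Eu_aux[OF hm hr])
    then show ?thesis using fp_mul[of "\<alpha>*s" n] by (rule mul_inv_eq)
  qed
  have "\<i>*q^(n-1)*Fn n (-\<alpha>) (-1/q) - s^n * (\<alpha>^(n-1)*q^(n-1)*Fn n (1/\<alpha>) (1/q))
      = \<i>*(-(\<i>/2))*(q^(n-1)*q)*(2*m*(1 - t2^n)) - (-(\<i>/2))*(2*\<i>*\<alpha>*m)*(q^(n-1)*q)*((s^n*\<alpha>^(n-1)) - (s^n*\<alpha>^(n-1))*t3^n)"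
    unfolding F2 F3 E2 E3 by (simp add: algebra_simps)
  also have "\<dots> = \<i>*(-(\<i>/2))*(q^n)*(2*m*(1 - t2^n)) - (-(\<i>/2))*(2*\<i>*\<alpha>*m)*(q^n)*((\<alpha>*s)^n*ai - t2^n*ai)"
    unfolding qn k1 k2 ..
  also have "\<dots> = q^n * fpoly n (\<alpha>*s) * r"
  proof -
    have aux: "\<i>*(-(\<i>/2))*Q*(2*m*(1 - X)) - (-(\<i>/2))*(2*\<i>*\<alpha>*m)*Q*(U*ai - X*ai) = Q * ((q+\<i>)*m*(1 - U)) * r" for X U Q
      by (rule auxt[OF ha hr])
    show ?thesis unfolding Eu by (rule aux)
  qed
  finally show ?thesis unfolding sdef r_def by simp
qed

lemma bez_unique:
  fixes P Q :: "complex poly"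
  assumes dP: "degree P < n" and dQ: "degree Q < n" and S: "infinite S"
    and eq: "\<forall>q\<in>S. (q+\<i>)^n * poly P q = (-(1+\<i>*q))^n * poly Q q"
  shows "P = 0 \<and> Q = 0"
proof -
  define A where "A = [:-(-\<i>),1:]^n"
  define B where "B = [:-1,-\<i>:]^n"
  have pA: "poly A q = (q+\<i>)^n" for q unfolding A_def by (simp add: algebra_simps)
  have pB: "poly B q = (-(1+\<i>*q))^n" for q unfolding B_def by (simp add: algebra_simps)
  have R0: "A * P - B * Q = 0"
  proof (rule ccontr)
    assume "A * P - B * Q \<noteq> 0"
    then have "finite {x. poly (A * P - B * Q) x = 0}" by (rule poly_roots_finite)
    moreover have "S \<subseteq> {x. poly (A * P - B * Q) x = 0}" using eq pA pB by auto
    ultimately show False using S finite_subset by blast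
  qed
  then have AB: "A * P = B * Q" by simp
  have A0: "A \<noteq> 0" unfolding A_def by simp
  have B0: "B \<noteq> 0" unfolding B_def by simp
  have oA: "order (-\<i>) A = n" unfolding A_def by (rule order_power_n_n)
  have oB: "order (-\<i>) B = 0" by (rule order_0I) (simp add: pB)
  have Q0: "Q = 0"
  proof (rule ccontr)
    assume Q: "Q \<noteq> 0"
    then have BQ: "B * Q \<noteq> 0" using B0 by simp
    then have AP: "A * P \<noteq> 0" using AB by simp
    have "order (-\<i>) (A * P) = n + order (-\<i>) P" using order_mult[OF AP] oA by simp
    moreover have "order (-\<i>) (B * Q) = order (-\<i>) Q" using order_mult[OF BQ] oB by simp
    moreover have "order (-\<i>) Q \<le> degree Q" by (rule order_degree[OF Q])
    ultimately show False using AB dQ by simp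
  qed
  then have "A * P = 0" using AB by simp
  then have "P = 0" using A0 by simp
  then show ?thesis using Q0 by simp
qed

definition geomP :: "nat \<Rightarrow> complex \<Rightarrow> complex \<Rightarrow> complex poly" where
  "geomP n c0 c1 = (\<Sum>k<n. [:c0,c1:]^k)"

definition geomQ :: "nat \<Rightarrow> complex \<Rightarrow> complex \<Rightarrow> complex poly" where
  "geomQ n c0 c1 = (\<Sum>k<n. monom 1 (n-1-k) * [:c0,c1:]^k)"

lemma poly_geomP: "poly (geomP n c0 c1) q = fpoly n (c0 + c1*q)"
  unfolding geomP_def fpoly_def by (simp add: poly_sum algebra_simps)

lemma degree_pair_power: "degree ([:c0,c1:]^k) \<le> k"
proof -
  have "degree ([:c0,c1:]^k) \<le> degree [:c0,c1:] * k" by (rule degree_power_le)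
  also have "\<dots> \<le> k" by (cases "c1 = 0") auto
  finally show ?thesis .
qed

lemma degree_geomP: "1 \<le> n \<Longrightarrow> degree (geomP n c0 c1) < n"
  unfolding geomP_def
  by (rule degree_sum_less) (auto intro: le_less_trans[OF degree_pair_power])

lemma degree_geomQ: "1 \<le> n \<Longrightarrow> degree (geomQ n c0 c1) < n"
  unfolding geomQ_def
proof (rule degree_sum_less)
  fix k assume k: "k \<in> {..<n}" and n: "1 \<le> n"
  have "degree (monom (1::complex) (n-1-k) * [:c0,c1:]^k) \<le> degree (monom (1::complex) (n-1-k)) + degree ([:c0,c1:]^k)"
    by (rule degree_mult_le)
  also have "\<dots> \<le> (n-1-k) + k" using degree_monom_le degree_pair_power by (intro add_mono) auto
  finally show "degree (monom 1 (n-1-k) * [:c0,c1:]^k) < n" using k n by auto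
qed (simp_all)

lemma poly_geomQ:
  assumes "q \<noteq> 0"
  shows "poly (geomQ n c0 c1) q = q^(n-1) * fpoly n ((c0 + c1*q)/q)"
proof -
  have "poly (geomQ n c0 c1) q = (\<Sum>k<n. q^(n-1-k) * (c0 + c1*q)^k)"
    unfolding geomQ_def by (simp add: poly_sum poly_monom algebra_simps)
  also have "\<dots> = (\<Sum>k<n. q^(n-1) * ((c0 + c1*q)/q)^k)"
  proof (rule sum.cong[OF refl])
    fix k assume "k \<in> {..<n}"
    then have "n - 1 = (n-1-k) + k" by auto
    then have "q^(n-1) = q^(n-1-k) * q^k" by (metis power_add)
    then show "q^(n-1-k) * (c0 + c1*q)^k = q^(n-1) * ((c0 + c1*q)/q)^k"
      using assms by (simp add: power_divide)
  qed
  also have "\<dots> = q^(n-1) * fpoly n ((c0 + c1*q)/q)"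
    unfolding fpoly_def by (simp add: sum_distrib_left)
  finally show ?thesis .
qed

lemma coeffs_zero:
  fixes c :: "nat \<Rightarrow> complex"
  assumes "infinite S" "\<forall>x\<in>S. (\<Sum>j<m. c j * x^j) = 0"
  shows "\<forall>j<m. c j = 0"
proof -
  define P where "P = (\<Sum>j<m. monom (c j) j)"
  have pP: "poly P x = (\<Sum>j<m. c j * x^j)" for x unfolding P_def by (simp add: poly_sum poly_monom)
  have "P = 0"
  proof (rule ccontr)
    assume "P \<noteq> 0"
    then have "finite {x. poly P x = 0}" by (rule poly_roots_finite)
    moreover have "S \<subseteq> {x. poly P x = 0}" using assms(2) pP by auto
    ultimately show False using assms(1) finite_subset by blast
  qed
  then have "coeff P j = 0" for j by simp
  moreover have "coeff P j = (if j < m then c j else 0)" for j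
    unfolding P_def coeff_sum by (simp add: sum.delta)
  ultimately show ?thesis by (metis)
qed

lemma poly_of_sum: "poly (\<Sum>c<n. monom (f c) c) q = (\<Sum>c<n. f c * q^c :: complex)"
  by (simp add: poly_sum poly_monom)

lemma degree_of_sum: "1 \<le> n \<Longrightarrow> degree (\<Sum>c<n. monom (f c) c :: complex poly) < n"
  by (rule degree_sum_less) (auto intro: le_less_trans[OF degree_monom_le])

lemma infinite_cofinite:
  fixes A :: "complex set"
  assumes "finite A"
  shows "infinite (UNIV - A)"
  using assms infinite_UNIV_char_0 by (metis Diff_infinite_finite)

lemma finite_lin: "(a::complex) \<noteq> 0 \<or> b \<noteq> 0 \<Longrightarrow> finite {q. a*q + b = 0}"
proof -
  assume h: "a \<noteq> 0 \<or> b \<noteq> 0"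
  show ?thesis
  proof (cases "a = 0")
    case True then show ?thesis using h by simp
  next
    case False
    have "q = -b/a" if "a*q + b = 0" for q
    proof -
      have "a*q = -b" using that by (simp add: eq_neg_iff_add_eq_0)
      then show ?thesis using False by (simp add: field_simps)
    qed
    then have "{q. a*q + b = 0} \<subseteq> {-b/a}" by auto
    then show ?thesis by (rule finite_subset) simp
  qed
qed

lemma Cq_s: "x + \<i> \<noteq> 0 \<Longrightarrow> Cq (-(1+\<i>*x)/(x+\<i>)) x = 0"
  unfolding Cq_def by (simp add: field_simps)

lemma Cq_s2: "x + \<i> \<noteq> 0 \<Longrightarrow> Cq x (-(1+\<i>*x)/(x+\<i>)) = 0"
  unfolding Cq_def by (simp add: field_simps)

lemma bez_step:
  fixes x Bt Tp :: complex
  assumes xi: "x + \<i> \<noteq> 0" and xi2: "1 + \<i>*x \<noteq> 0"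
    and E: "(1+\<i>*x)*Bt + (-(1+\<i>*x)/(x+\<i>))^(Suc n)*(x+\<i>)*Tp = Z"
  shows "(x+\<i>)^n * (Bt - Z/(1+\<i>*x)) = (-(1+\<i>*x))^n * Tp"
proof -
  define r where "r = 1/(x+\<i>)"
  define w where "w = 1/(1+\<i>*x)"
  have hr: "r*(x+\<i>) = 1" using xi r_def by simp
  have hw: "w*(1+\<i>*x) = 1" using xi2 w_def by simp
  define s where "s = -(1+\<i>*x)*r"
  have sd: "-(1+\<i>*x)/(x+\<i>) = s" unfolding s_def r_def by simp
  have pw: "(x+\<i>)^n * s^n = (-(1+\<i>*x))^n"
  proof -
    have "(x+\<i>)*s = -(1+\<i>*x)" unfolding s_def using hr
      by (metis mult.commute mult.left_commute mult_1 mult_minus_left mult_minus_right)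
    then show ?thesis by (metis power_mult_distrib)
  qed
  have E': "(1+\<i>*x)*Bt + s^n*s*(x+\<i>)*Tp = Z" using E unfolding sd by (simp add: mult_ac)
  have hs: "s*(x+\<i>) = -(1+\<i>*x)" unfolding s_def by (rule hs_aux[OF hr])
  have aux: "Bt - Z*w = S*Tp" if h: "(1+\<i>*x)*Bt + S*s*(x+\<i>)*Tp = Z" for S
  proof -
    have "S*s*(x+\<i>)*Tp = S*(s*(x+\<i>))*Tp" by (simp add: mult_ac)
    also have "\<dots> = -((1+\<i>*x)*(S*Tp))" unfolding hs by (simp add: algebra_simps)
    finally have "(1+\<i>*x)*Bt - (1+\<i>*x)*(S*Tp) = Z" using h by simp
    then have "(1+\<i>*x)*(Bt - S*Tp) = Z" by (simp add: right_diff_distrib)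
    then have "Bt - S*Tp = w*Z" using hw by (intro mul_inv_eq[of "1+\<i>*x" w]) (simp_all add: mult.commute)
    then show ?thesis by (simp add: algebra_simps)
  qed
  have "Bt - Z*w = s^n*Tp" by (rule aux[OF E'])
  then have "(x+\<i>)^n * (Bt - Z*w) = ((x+\<i>)^n * s^n) * Tp" by simp
  then show ?thesis unfolding pw w_def by simp
qed

lemma homog:
  assumes n1: "1 \<le> n" and K: "\<forall>a<Suc n. \<forall>c<n. (\<Sum>j<n. \<Sum>k<Suc n. Kf a c j k * u j k) = 0"
  shows "\<forall>j<n. \<forall>k<Suc n. u j k = 0"
proof -
  define U where "U x g = (\<Sum>j<n. \<Sum>k<Suc n. u j k * x^j * g^k)" for x g
  define Bt where "Bt x = (\<Sum>j<n. u j 0 * x^j)" for x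
  define Tp where "Tp x = (\<Sum>j<n. u j n * x^j)" for x
  have E: "U x g * Cq x g - (1+\<i>*x)*Bt x - g^(Suc n)*(x+\<i>)*Tp x = 0" for x g
  proof -
    have "(\<Sum>a<Suc n. \<Sum>c<n. (\<Sum>j<n. \<Sum>k<Suc n. Kf a c j k * u j k) * x^a * g^c) = 0"
      by (rule sum.neutral, rule ballI, rule sum.neutral) (use K in auto)
    then show ?thesis using genB[OF n1, of g u x] unfolding U_def Bt_def Tp_def by (simp del: sum.lessThan_Suc)
  qed
  define S where "S = UNIV - {-\<i>, \<i>::complex}"
  have Sinf: "infinite S" unfolding S_def by (rule infinite_cofinite) simp
  have "\<forall>x\<in>S. (x+\<i>)^n * poly (\<Sum>j<n. monom (u j 0) j) x = (-(1+\<i>*x))^n * poly (\<Sum>j<n. monom (u j n) j) x"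
  proof
    fix x assume "x \<in> S"
    then have xm: "x \<noteq> -\<i>" and xp: "x \<noteq> \<i>" unfolding S_def by auto
    have xi: "x + \<i> \<noteq> 0" using xm by (metis add_eq_0_iff2)
    have "1 + \<i>*x = \<i>*(x - \<i>)" by (simp add: algebra_simps)
    then have xi2: "1 + \<i>*x \<noteq> 0" using xp by simp
    define s where "s = -(1+\<i>*x)/(x+\<i>)"
    have "U x s * Cq x s - (1+\<i>*x)*Bt x - s^(Suc n)*(x+\<i>)*Tp x = 0" by (rule E)
    then have "(1+\<i>*x)*Bt x + s^(Suc n)*(x+\<i>)*Tp x = 0" using Cq_s2[OF xi] unfolding s_def
      by (simp add: algebra_simps)
    then have "(x+\<i>)^n * (Bt x - 0/(1+\<i>*x)) = (-(1+\<i>*x))^n * Tp x"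
      unfolding s_def by (rule bez_step[OF xi xi2])
    then show "(x+\<i>)^n * poly (\<Sum>j<n. monom (u j 0) j) x = (-(1+\<i>*x))^n * poly (\<Sum>j<n. monom (u j n) j) x"
      unfolding poly_of_sum Bt_def Tp_def by simp
  qed
  from bez_unique[OF degree_of_sum[OF n1] degree_of_sum[OF n1] Sinf this]
  have PQ: "(\<Sum>j<n. monom (u j 0) j) = 0" "(\<Sum>j<n. monom (u j n) j) = 0" by auto
  have Bt0: "Bt x = 0" for x using arg_cong[OF PQ(1), of "\<lambda>P. poly P x"] unfolding poly_of_sum Bt_def by simp
  have Tp0: "Tp x = 0" for x using arg_cong[OF PQ(2), of "\<lambda>P. poly P x"] unfolding poly_of_sum Tp_def by simp
  have UC: "U x g * Cq x g = 0" for x g using E[of x g] Bt0 Tp0 by simp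
  have row0: "\<forall>j<n. (\<Sum>k<Suc n. u j k * g^k) = 0" for g
  proof (rule coeffs_zero)
    define Sg where "Sg = UNIV - {x. (g+\<i>)*x + (1+\<i>*g) = 0}"
    have fin: "finite {x. (g+\<i>)*x + (1+\<i>*g) = 0}"
    proof (rule finite_lin)
      show "g + \<i> \<noteq> 0 \<or> 1 + \<i>*g \<noteq> 0"
      proof (cases "g + \<i> = 0")
        case True then have "g = -\<i>" by (simp add: add_eq_0_iff2)
        then show ?thesis by simp
      qed simp
    qed
    show "infinite Sg" unfolding Sg_def by (rule infinite_cofinite[OF fin])
    show "\<forall>x\<in>Sg. (\<Sum>j<n. (\<Sum>k<Suc n. u j k * g^k) * x^j) = 0"
    proof
      fix x assume "x \<in> Sg"
      then have "Cq x g \<noteq> 0" unfolding Sg_def Cq_def by (auto simp: algebra_simps)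
      then have "U x g = 0" using UC[of x g] by simp
      then show "(\<Sum>j<n. (\<Sum>k<Suc n. u j k * g^k) * x^j) = 0"
        unfolding U_def by (simp add: sum_distrib_left sum_distrib_right mult_ac del: sum.lessThan_Suc)
    qed
  qed
  show ?thesis
  proof (intro allI impI)
    fix j k assume j: "j < n" and k: "k < Suc n"
    have "\<forall>k<Suc n. u j k = 0"
      by (rule coeffs_zero[of UNIV]) (use row0 j infinite_UNIV_char_0[where 'a=complex] in \<open>auto simp: mult.commute\<close>)
    then show "u j k = 0" using k by simp
  qed
qed



lemma sum_add_split: "(\<Sum>t<a+(b::nat). f t) = (\<Sum>t<a. f t) + (\<Sum>k<b. f (a+k))"
  by (induction b) (simp_all add: add.assoc)

lemma sum_split_idx: "(\<Sum>t<(m::nat)*p. f t) = (\<Sum>j<m. \<Sum>k<p. f (j*p + k))"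
proof (induction m)
  case (Suc m)
  have "(\<Sum>t<Suc m*p. f t) = (\<Sum>t<m*p + p. f t)" by (simp add: add.commute)
  also have "\<dots> = (\<Sum>t<m*p. f t) + (\<Sum>k<p. f (m*p+k))" by (rule sum_add_split)
  finally show ?case using Suc.IH by simp
qed simp

definition Km :: "nat \<Rightarrow> complex mat" where
  "Km n = mat (n*Suc n) (n*Suc n) (\<lambda>(r,t). Kf (r div n) (r mod n) (t div Suc n) (t mod Suc n))"

lemma divmod_idx: "k < (p::nat) \<Longrightarrow> (j*p+k) div p = j \<and> (j*p+k) mod p = k"
  by simp

lemma bidx_lt: "a < Suc n \<Longrightarrow> c < n \<Longrightarrow> a*n + c < n*Suc n"
proof -
  assume "a < Suc n" "c < n"
  then have "a*n + c < a*n + n" by simp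
  also have "\<dots> = Suc a * n" by simp
  also have "\<dots> \<le> Suc n * n" using \<open>a < Suc n\<close> by (intro mult_le_mono1) simp
  finally show ?thesis by (simp add: mult.commute)
qed

lemma widx_lt: "j < n \<Longrightarrow> k < Suc n \<Longrightarrow> j*Suc n + k < n*Suc n"
proof -
  assume "j < n" "k < Suc n"
  then have "j*Suc n + k < j*Suc n + Suc n" by simp
  also have "\<dots> = Suc j * Suc n" by simp
  also have "\<dots> \<le> n * Suc n" using \<open>j < n\<close> by (intro mult_le_mono1) simp
  finally show ?thesis .
qed

lemma Km_index:
  assumes "a < Suc n" "c < n" "j < n" "k < Suc n"
  shows "Km n $$ (a*n+c, j*Suc n+k) = Kf a c j k"
proof -
  have d: "(j*Suc n + k) div Suc n = j" "(j*Suc n+k) mod Suc n = k" "(a*n+c) div n = a" "(a*n+c) mod n = c"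
    using assms divmod_idx[of k "Suc n" j] divmod_idx[of c n a] by simp_all
  have "Km n $$ (a*n+c, j*Suc n+k) = Kf ((a*n+c) div n) ((a*n+c) mod n) ((j*Suc n+k) div Suc n) ((j*Suc n+k) mod Suc n)"
    unfolding Km_def by (rule trans[OF index_mat(1)]) (use bidx_lt[OF assms(1,2)] widx_lt[OF assms(3,4)] in auto)
  then show ?thesis unfolding d .
qed

lemma Km_carrier: "Km n \<in> carrier_mat (n*Suc n) (n*Suc n)"
  unfolding Km_def by simp

lemma Km_mult_vec:
  assumes a: "a < Suc n" and c: "c < n" and v: "v \<in> carrier_vec (n*Suc n)"
  shows "(Km n *\<^sub>v v) $ (a*n+c) = (\<Sum>j<n. \<Sum>k<Suc n. Kf a c j k * v $ (j*Suc n + k))"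
proof -
  have r: "a*n+c < n*Suc n" by (rule bidx_lt[OF a c])
  define M where "M = n*Suc n"
  have KM: "Km n \<in> carrier_mat M M" unfolding M_def by (rule Km_carrier)
  have vM: "v \<in> carrier_vec M" using v unfolding M_def .
  have rM: "a*n+c < M" using r unfolding M_def .
  have "(Km n *\<^sub>v v) $ (a*n+c) = row (Km n) (a*n+c) \<bullet> v" using rM KM by simp
  also have "\<dots> = (\<Sum>t\<in>{0..<M}. row (Km n) (a*n+c) $ t * v $ t)" unfolding scalar_prod_def using vM by simp
  also have "\<dots> = (\<Sum>t<M. Km n $$ (a*n+c, t) * v $ t)"
    unfolding atLeast0LessThan using rM KM by (intro sum.cong refl) simp
  finally have "(Km n *\<^sub>v v) $ (a*n+c) = (\<Sum>t<n*Suc n. Km n $$ (a*n+c, t) * v $ t)" unfolding M_def .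
  also have "\<dots> = (\<Sum>j<n. \<Sum>k<Suc n. Km n $$ (a*n+c, j*Suc n+k) * v $ (j*Suc n + k))"
    by (rule sum_split_idx)
  also have "\<dots> = (\<Sum>j<n. \<Sum>k<Suc n. Kf a c j k * v $ (j*Suc n + k))"
    by (intro sum.cong refl, subst Km_index[OF a c]) auto
  finally show ?thesis .
qed

lemma Km_det: assumes n1: "1 \<le> n" shows "det (Km n) \<noteq> 0"
proof
  assume "det (Km n) = 0"
  then obtain v where v: "v \<in> carrier_vec (n*Suc n)" "v \<noteq> 0\<^sub>v (n*Suc n)" "Km n *\<^sub>v v = 0\<^sub>v (n*Suc n)"
    using det_0_iff_vec_prod_zero[OF Km_carrier] by blast
  define u where "u j k = v $ (j*Suc n + k)" for j k
  have "\<forall>a<Suc n. \<forall>c<n. (\<Sum>j<n. \<Sum>k<Suc n. Kf a c j k * u j k) = 0"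
  proof (intro allI impI)
    fix a c assume a: "a < Suc n" and c: "c < n"
    have "(\<Sum>j<n. \<Sum>k<Suc n. Kf a c j k * u j k) = (Km n *\<^sub>v v) $ (a*n+c)"
      unfolding u_def Km_mult_vec[OF a c v(1)] ..
    also have "\<dots> = 0" using v(3) bidx_lt[OF a c] by simp
    finally show "(\<Sum>j<n. \<Sum>k<Suc n. Kf a c j k * u j k) = 0" .
  qed
  then have u0: "\<forall>j<n. \<forall>k<Suc n. u j k = 0" by (rule homog[OF n1])
  have "v = 0\<^sub>v (n*Suc n)"
  proof (rule eq_vecI)
    fix t assume "t < dim_vec (0\<^sub>v (n*Suc n))"
    then have t: "t < n*Suc n" by simp
    have td: "t div Suc n < n" using t by (simp add: less_mult_imp_div_less)
    have "t = (t div Suc n) * Suc n + t mod Suc n" by (simp only: div_mult_mod_eq)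
    then have "v $ t = u (t div Suc n) (t mod Suc n)" unfolding u_def by simp
    then show "v $ t = 0\<^sub>v (n*Suc n) $ t" using u0 td t by simp
  qed (use v(1) in simp)
  then show False using v(2) by simp
qed

lemma Km_inv: assumes n1: "1 \<le> n"
  shows "\<exists>B\<in>carrier_mat (n*Suc n) (n*Suc n). B * Km n = 1\<^sub>m (n*Suc n) \<and> Km n * B = 1\<^sub>m (n*Suc n)"
proof -
  have "Km n \<in> Units (ring_mat TYPE(complex) (n*Suc n) ())"
    by (rule det_non_zero_imp_unit[OF Km_carrier Km_det[OF n1]])
  then show ?thesis unfolding Units_def ring_mat_def by auto
qed

lemma mat_entry_sum:
  assumes "A \<in> carrier_mat M M" "B \<in> carrier_mat M M" "i < M" "j < M"
  shows "(A * B) $$ (i,j) = (\<Sum>t<M. A $$ (i,t) * B $$ (t,j))"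
proof -
  have "(A * B) $$ (i,j) = row A i \<bullet> col B j" using assms by simp
  also have "\<dots> = (\<Sum>t\<in>{0..<M}. row A i $ t * col B j $ t)" unfolding scalar_prod_def using assms by simp
  also have "\<dots> = (\<Sum>t<M. A $$ (i,t) * B $$ (t,j))" unfolding atLeast0LessThan using assms by (intro sum.cong refl) simp
  finally show ?thesis .
qed

lemma KB_entry:
  assumes B: "B \<in> carrier_mat (n*Suc n) (n*Suc n)" and a: "a < Suc n" and c: "c < n" and a': "a' < Suc n" and c': "c' < n"
  shows "(Km n * B) $$ (a*n+c, a'*n+c') = (\<Sum>j<n. \<Sum>k<Suc n. Kf a c j k * B $$ (j*Suc n+k, a'*n+c'))"
proof -
  have "(Km n * B) $$ (a*n+c, a'*n+c') = (\<Sum>t<n*Suc n. Km n $$ (a*n+c,t) * B $$ (t,a'*n+c'))"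
    by (rule mat_entry_sum[OF Km_carrier B bidx_lt[OF a c] bidx_lt[OF a' c']])
  also have "\<dots> = (\<Sum>j<n. \<Sum>k<Suc n. Km n $$ (a*n+c,j*Suc n+k) * B $$ (j*Suc n+k,a'*n+c'))"
    by (rule sum_split_idx)
  also have "\<dots> = (\<Sum>j<n. \<Sum>k<Suc n. Kf a c j k * B $$ (j*Suc n+k, a'*n+c'))"
    by (intro sum.cong refl, subst Km_index[OF a c]) auto
  finally show ?thesis .
qed

lemma BK_entry:
  assumes B: "B \<in> carrier_mat (n*Suc n) (n*Suc n)" and j: "j < n" and k: "k < Suc n" and j': "j' < n" and k': "k' < Suc n"
  shows "(B * Km n) $$ (j*Suc n+k, j'*Suc n+k') = (\<Sum>a<Suc n. \<Sum>c<n. B $$ (j*Suc n+k, a*n+c) * Kf a c j' k')"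
proof -
  have "(B * Km n) $$ (j*Suc n+k, j'*Suc n+k') = (\<Sum>t<n*Suc n. B $$ (j*Suc n+k,t) * Km n $$ (t,j'*Suc n+k'))"
    by (rule mat_entry_sum[OF B Km_carrier widx_lt[OF j k] widx_lt[OF j' k']])
  also have "\<dots> = (\<Sum>t<Suc n*n. B $$ (j*Suc n+k,t) * Km n $$ (t,j'*Suc n+k'))"
    by (simp only: mult.commute)
  also have "\<dots> = (\<Sum>a<Suc n. \<Sum>c<n. B $$ (j*Suc n+k,a*n+c) * Km n $$ (a*n+c,j'*Suc n+k'))"
    by (rule sum_split_idx)
  also have "\<dots> = (\<Sum>a<Suc n. \<Sum>c<n. B $$ (j*Suc n+k, a*n+c) * Kf a c j' k')"
    by (intro sum.cong refl, subst Km_index[OF _ _ j' k']) auto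
  finally show ?thesis .
qed

definition GB :: "nat \<Rightarrow> complex mat \<Rightarrow> nat \<times> nat \<Rightarrow> nat \<times> nat \<Rightarrow> complex" where
  "GB n B y x = (if y \<in> Wset n \<and> x \<in> Bset n then B $$ ((fst y div 2)*Suc n + snd y div 2, (fst x div 2)*n + snd x div 2) else 0)"

lemma GB_idx: "j < n \<Longrightarrow> k < Suc n \<Longrightarrow> a < Suc n \<Longrightarrow> c < n \<Longrightarrow> GB n B (2*j+1, 2*k) (2*a, 2*c+1) = B $$ (j*Suc n+k, a*n+c)"
  unfolding GB_def Wset_img Bset_img by auto

lemma Bset_obtain: "x \<in> Bset n \<Longrightarrow> \<exists>a c. a < Suc n \<and> c < n \<and> x = (2*a, 2*c+1)"
  unfolding Bset_img by auto

lemma Wset_obtain: "y \<in> Wset n \<Longrightarrow> \<exists>j k. j < n \<and> k < Suc n \<and> y = (2*j+1, 2*k)"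
  unfolding Wset_img by auto

lemma idx_inj: assumes "c < (n::nat)" "c' < n" shows "(a*n+c = a'*n+c') = (a = a' \<and> c = c')"
proof
  assume h: "a*n+c = a'*n+c'"
  have "a = (a*n+c) div n" "c = (a*n+c) mod n" using divmod_idx[OF assms(1), of a] by simp_all
  moreover have "a' = (a'*n+c') div n" "c' = (a'*n+c') mod n" using divmod_idx[OF assms(2), of a'] by simp_all
  ultimately show "a = a' \<and> c = c'" using h by metis
qed simp

lemma bidx_inj: "(c::nat) < n \<Longrightarrow> c' < n \<Longrightarrow> (a*n+c = a'*n+c') = (a = a' \<and> c = c')"
  using idx_inj[of c n c' a a'] by simp

lemma widx_inj: "k < Suc n \<Longrightarrow> k' < Suc n \<Longrightarrow> (j*Suc n+k = j'*Suc n+k') = (j = j' \<and> k = k')"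
  using idx_inj[of k "Suc n" k' j j'] by simp

lemma GB_is_Kinv:
  assumes n1: "1 \<le> n" and B: "B \<in> carrier_mat (n*Suc n) (n*Suc n)"
    and BK: "B * Km n = 1\<^sub>m (n*Suc n)" and KB: "Km n * B = 1\<^sub>m (n*Suc n)"
  shows "is_Kinv n (GB n B)"
  unfolding is_Kinv_def
proof (intro conjI ballI allI impI)
  fix y x assume "\<not> (y \<in> Wset n \<and> x \<in> Bset n)"
  then show "GB n B y x = 0" unfolding GB_def by auto
next
  fix x z assume x: "x \<in> Bset n" and z: "z \<in> Bset n"
  obtain a c where ac: "a < Suc n" "c < n" "x = (2*a, 2*c+1)" using Bset_obtain[OF x] by blast
  obtain a' c' where ac': "a' < Suc n" "c' < n" "z = (2*a', 2*c'+1)" using Bset_obtain[OF z] by blast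
  have "(\<Sum>y\<in>Wset n. Kast n x y * GB n B y z) = (\<Sum>j<n. \<Sum>k<Suc n. Kf a c j k * B $$ (j*Suc n+k, a'*n+c'))"
    unfolding sum_Wset ac(3) ac'(3)
  proof (intro sum.cong refl)
    fix j k assume "j \<in> {..<n}" "k \<in> {..<Suc n}"
    then have jk: "j < n" "k \<le> n" "k < Suc n" by auto
    have "a \<le> n" using ac by simp
    then show "Kast n (2*a, 2*c+1) (2*j+1, 2*k) * GB n B (2*j+1, 2*k) (2*a', 2*c'+1) = Kf a c j k * B $$ (j*Suc n+k, a'*n+c')"
      by (simp only: Kast_idx[OF _ ac(2) jk(1,2)] GB_idx[OF jk(1,3) ac'(1,2)])
  qed
  also have "\<dots> = (Km n * B) $$ (a*n+c, a'*n+c')" by (rule KB_entry[OF B ac(1,2) ac'(1,2), symmetric])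
  also have "\<dots> = (if x = z then 1 else 0)"
    unfolding KB using bidx_lt[OF ac(1,2)] bidx_lt[OF ac'(1,2)] bidx_inj[OF ac(2) ac'(2)] ac(3) ac'(3) by simp
  finally show "(\<Sum>y\<in>Wset n. Kast n x y * GB n B y z) = (if x = z then 1 else 0)" .
next
  fix y y' assume y: "y \<in> Wset n" and y': "y' \<in> Wset n"
  obtain j k where jk: "j < n" "k < Suc n" "y = (2*j+1, 2*k)" using Wset_obtain[OF y] by blast
  obtain j' k' where jk': "j' < n" "k' < Suc n" "y' = (2*j'+1, 2*k')" using Wset_obtain[OF y'] by blast
  have "(\<Sum>x\<in>Bset n. GB n B y x * Kast n x y') = (\<Sum>a<Suc n. \<Sum>c<n. B $$ (j*Suc n+k, a*n+c) * Kf a c j' k')"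
    unfolding sum_Bset jk(3) jk'(3)
  proof (intro sum.cong refl)
    fix a c assume "a \<in> {..<Suc n}" "c \<in> {..<n}"
    then have ac: "a \<le> n" "c < n" "a < Suc n" by auto
    have "k' \<le> n" using jk' by simp
    then show "GB n B (2*j+1, 2*k) (2*a, 2*c+1) * Kast n (2*a, 2*c+1) (2*j'+1, 2*k') = B $$ (j*Suc n+k, a*n+c) * Kf a c j' k'"
      by (simp only: Kast_idx[OF ac(1,2) jk'(1)] GB_idx[OF jk(1,2) ac(3,2)])
  qed
  also have "\<dots> = (B * Km n) $$ (j*Suc n+k, j'*Suc n+k')" by (rule BK_entry[OF B jk(1,2) jk'(1,2), symmetric])
  also have "\<dots> = (if y = y' then 1 else 0)"
    unfolding BK using widx_lt[OF jk(1,2)] widx_lt[OF jk'(1,2)] widx_inj[OF jk(2) jk'(2)] jk(3) jk'(3) by simp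
  finally show "(\<Sum>x\<in>Bset n. GB n B y x * Kast n x y') = (if y = y' then 1 else 0)" .
qed

lemma is_Kinv_zero: "is_Kinv n G \<Longrightarrow> \<not> (y \<in> Wset n \<and> x \<in> Bset n) \<Longrightarrow> G y x = 0"
  unfolding is_Kinv_def by blast

lemma Kinv_unique:
  assumes G: "is_Kinv n G" and H: "is_Kinv n H"
  shows "G = H"
proof (intro ext)
  fix y x
  show "G y x = H y x"
  proof (cases "y \<in> Wset n \<and> x \<in> Bset n")
    case False then show ?thesis using is_Kinv_zero[OF G False] is_Kinv_zero[OF H False] by simp
  next
    case True
    have fW: "finite (Wset n)" unfolding Wset_img by simp
    have fB: "finite (Bset n)" unfolding Bset_img by simp
    have "(\<Sum>x'\<in>Bset n. G y x' * (if x' = x then 1 else 0)) = (\<Sum>x'\<in>Bset n. if x' = x then G y x' else 0)"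
      by (intro sum.cong) auto
    also have "\<dots> = G y x" using True fB by (simp add: sum.delta)
    finally have "G y x = (\<Sum>x'\<in>Bset n. G y x' * (if x' = x then 1 else 0))" by simp
    also have "\<dots> = (\<Sum>x'\<in>Bset n. G y x' * (\<Sum>y'\<in>Wset n. Kast n x' y' * H y' x))"
      using H True unfolding is_Kinv_def by (intro sum.cong refl) simp
    also have "\<dots> = (\<Sum>y'\<in>Wset n. (\<Sum>x'\<in>Bset n. G y x' * Kast n x' y') * H y' x)"
    proof -
      have "(\<Sum>x'\<in>Bset n. G y x' * (\<Sum>y'\<in>Wset n. Kast n x' y' * H y' x)) = (\<Sum>x'\<in>Bset n. \<Sum>y'\<in>Wset n. G y x' * Kast n x' y' * H y' x)"
        by (simp add: sum_distrib_left mult.assoc)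
      also have "\<dots> = (\<Sum>y'\<in>Wset n. \<Sum>x'\<in>Bset n. G y x' * Kast n x' y' * H y' x)" by (rule sum.swap)
      also have "\<dots> = (\<Sum>y'\<in>Wset n. (\<Sum>x'\<in>Bset n. G y x' * Kast n x' y') * H y' x)"
        by (simp add: sum_distrib_right)
      finally show ?thesis .
    qed
    also have "\<dots> = (\<Sum>y'\<in>Wset n. (if y = y' then 1 else 0) * H y' x)"
      using G True unfolding is_Kinv_def by (intro sum.cong refl) simp
    also have "\<dots> = (\<Sum>y'\<in>Wset n. if y = y' then H y' x else 0)" by (intro sum.cong) auto
    also have "\<dots> = H y x" using True fW by (simp add: sum.delta')
    finally show ?thesis .
  qed
qed

lemma Kinv_spec: assumes n1: "1 \<le> n" shows "is_Kinv n (Kinv n)"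
proof -
  obtain B where B: "B \<in> carrier_mat (n*Suc n) (n*Suc n)" "B * Km n = 1\<^sub>m (n*Suc n)" "Km n * B = 1\<^sub>m (n*Suc n)"
    using Km_inv[OF n1] by blast
  have "is_Kinv n (GB n B)" by (rule GB_is_Kinv[OF n1 B])
  then have "Kinv n = GB n B" unfolding Kinv_def
    using the_equality[of "is_Kinv n" "GB n B"] Kinv_unique by blast
  then show ?thesis using \<open>is_Kinv n (GB n B)\<close> by simp
qed



definition Gi :: "nat \<Rightarrow> nat \<Rightarrow> nat \<Rightarrow> nat \<Rightarrow> nat \<Rightarrow> complex" where
  "Gi n j k a c = Kinv n (2*j+1, 2*k) (2*a, 2*c+1)"

lemma inB: "a < Suc n \<Longrightarrow> c < n \<Longrightarrow> (2*a, 2*c+1) \<in> Bset n"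
  unfolding Bset_img by auto

lemma inW: "j < n \<Longrightarrow> k < Suc n \<Longrightarrow> (2*j+1, 2*k) \<in> Wset n"
  unfolding Wset_img by auto

lemma KG:
  assumes n1: "1 \<le> n" and a: "a < Suc n" and c: "c < n" and a': "a' < Suc n" and c': "c' < n"
  shows "(\<Sum>j<n. \<Sum>k<Suc n. Kf a c j k * Gi n j k a' c') = (if a = a' \<and> c = c' then 1 else 0)"
proof -
  have "(\<Sum>y\<in>Wset n. Kast n (2*a, 2*c+1) y * Kinv n y (2*a', 2*c'+1)) = (if (2*a, 2*c+1) = (2*a', 2*c'+1) then 1 else 0)"
    using Kinv_spec[OF n1] inB[OF a c] inB[OF a' c'] unfolding is_Kinv_def by blast
  moreover have "(\<Sum>y\<in>Wset n. Kast n (2*a, 2*c+1) y * Kinv n y (2*a', 2*c'+1)) = (\<Sum>j<n. \<Sum>k<Suc n. Kf a c j k * Gi n j k a' c')"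
    unfolding sum_Wset Gi_def
  proof (intro sum.cong refl)
    fix j k assume "j \<in> {..<n}" "k \<in> {..<Suc n}"
    then have jk: "j < n" "k \<le> n" by auto
    have "a \<le> n" using a by simp
    then show "Kast n (2*a, 2*c+1) (2*j+1, 2*k) * Kinv n (2*j+1, 2*k) (2*a', 2*c'+1) = Kf a c j k * Kinv n (2*j+1, 2*k) (2*a', 2*c'+1)"
      by (simp only: Kast_idx[OF _ c jk])
  qed
  ultimately show ?thesis by simp
qed

lemma GK:
  assumes n1: "1 \<le> n" and j: "j < n" and k: "k < Suc n" and j': "j' < n" and k': "k' < Suc n"
  shows "(\<Sum>a<Suc n. \<Sum>c<n. Gi n j k a c * Kf a c j' k') = (if j = j' \<and> k = k' then 1 else 0)"
proof -
  have "(\<Sum>x\<in>Bset n. Kinv n (2*j+1, 2*k) x * Kast n x (2*j'+1, 2*k')) = (if (2*j+1, 2*k) = (2*j'+1, 2*k') then 1 else 0)"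
    using Kinv_spec[OF n1] inW[OF j k] inW[OF j' k'] unfolding is_Kinv_def by blast
  moreover have "(\<Sum>x\<in>Bset n. Kinv n (2*j+1, 2*k) x * Kast n x (2*j'+1, 2*k')) = (\<Sum>a<Suc n. \<Sum>c<n. Gi n j k a c * Kf a c j' k')"
    unfolding sum_Bset Gi_def
  proof (intro sum.cong refl)
    fix a c assume "a \<in> {..<Suc n}" "c \<in> {..<n}"
    then have ac: "a \<le> n" "c < n" by auto
    have "k' \<le> n" using k' by simp
    then show "Kinv n (2*j+1, 2*k) (2*a, 2*c+1) * Kast n (2*a, 2*c+1) (2*j'+1, 2*k') = Kinv n (2*j+1, 2*k) (2*a, 2*c+1) * Kf a c j' k'"
      by (simp only: Kast_idx[OF ac j'])
  qed
  ultimately show ?thesis by simp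
qed

lemma swap3: "(\<Sum>a\<in>A. \<Sum>c\<in>C. \<Sum>j\<in>J. f a c j) = (\<Sum>j\<in>J. \<Sum>a\<in>A. \<Sum>c\<in>C. f a c j)"
proof -
  have "(\<Sum>a\<in>A. \<Sum>c\<in>C. \<Sum>j\<in>J. f a c j) = (\<Sum>a\<in>A. \<Sum>j\<in>J. \<Sum>c\<in>C. f a c j)"
    by (rule sum.cong[OF refl]) (rule sum.swap)
  also have "\<dots> = (\<Sum>j\<in>J. \<Sum>a\<in>A. \<Sum>c\<in>C. f a c j)" by (rule sum.swap)
  finally show ?thesis .
qed

lemma row_eq:
  assumes n1: "1 \<le> n" and k0: "k0 < Suc n"
  shows "p * (q^k0 * fpoly n (\<alpha>*p)) = (\<Sum>a<Suc n. \<Sum>c<n. (\<Sum>j<n. \<alpha>^j * Gi n j k0 a c) * p^a * q^c) * Cq p q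
     - (1+\<i>*q)*(\<Sum>c<n. (\<Sum>j<n. \<alpha>^j * Gi n j k0 0 c) * q^c)
     - p^(Suc n)*(q+\<i>)*(\<Sum>c<n. (\<Sum>j<n. \<alpha>^j * Gi n j k0 n c) * q^c)"
proof -
  define v where "v a c = (\<Sum>j<n. \<alpha>^j * Gi n j k0 a c)" for a c
  have inner: "(\<Sum>a<Suc n. \<Sum>c<n. v a c * Kf a c j k) = (if k0 = k then \<alpha>^j else 0)" if j: "j < n" and k: "k < Suc n" for j k
  proof -
    have "(\<Sum>a<Suc n. \<Sum>c<n. v a c * Kf a c j k) = (\<Sum>a<Suc n. \<Sum>c<n. \<Sum>j0<n. \<alpha>^j0 * (Gi n j0 k0 a c * Kf a c j k))"
      unfolding v_def by (simp add: sum_distrib_right mult.assoc del: sum.lessThan_Suc)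
    also have "\<dots> = (\<Sum>j0<n. \<alpha>^j0 * (\<Sum>a<Suc n. \<Sum>c<n. Gi n j0 k0 a c * Kf a c j k))"
      by (subst swap3) (simp add: sum_distrib_left del: sum.lessThan_Suc)
    also have "\<dots> = (\<Sum>j0<n. \<alpha>^j0 * (if j0 = j \<and> k0 = k then 1 else 0))"
      using GK[OF n1 _ k0 j k] by (intro sum.cong refl) simp
    also have "\<dots> = (\<Sum>j0<n. if j0 = j then (if k0 = k then \<alpha>^j else 0) else 0)"
      by (intro sum.cong refl) auto
    also have "\<dots> = (if k0 = k then \<alpha>^j else 0)" using j by (simp add: sum.delta)
    finally show ?thesis .
  qed
  have L: "p * (\<Sum>j<n. \<Sum>k<Suc n. (\<Sum>a<Suc n. \<Sum>c<n. v a c * Kf a c j k) * p^j * q^k) = p * (q^k0 * fpoly n (\<alpha>*p))"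
  proof -
    have "(\<Sum>j<n. \<Sum>k<Suc n. (\<Sum>a<Suc n. \<Sum>c<n. v a c * Kf a c j k) * p^j * q^k)
        = (\<Sum>j<n. \<Sum>k<Suc n. if k = k0 then \<alpha>^j * p^j * q^k0 else 0)"
      by (intro sum.cong refl) (simp add: inner del: sum.lessThan_Suc)
    also have "\<dots> = (\<Sum>j<n. \<alpha>^j * p^j * q^k0)" using k0 by (simp add: sum.delta del: sum.lessThan_Suc)
    also have "\<dots> = q^k0 * fpoly n (\<alpha>*p)" unfolding fpoly_def
      by (simp add: sum_distrib_left power_mult_distrib mult_ac)
    finally show ?thesis by simp
  qed
  have E: "p * (q^k0 * fpoly n (\<alpha>*p)) = (\<Sum>a<Suc n. \<Sum>c<n. v a c * p^a * q^c) * Cq p q - (1+\<i>*q)*(\<Sum>c<n. v 0 c * q^c)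
      - p^(Suc n)*(q+\<i>)*(\<Sum>c<n. v n c * q^c)"
    using genA[OF n1, of p v q] unfolding L .
  then show ?thesis unfolding v_def .
qed

lemma row_ident:
  fixes Lc Rc :: "nat \<Rightarrow> complex" and LP RP :: "complex poly" and Z :: "complex \<Rightarrow> complex"
  assumes n1: "1 \<le> n" and dL: "degree LP < n" and dR: "degree RP < n" and Sinf: "infinite S"
    and Sgood: "\<forall>q\<in>S. q + \<i> \<noteq> 0 \<and> 1 + \<i>*q \<noteq> 0"
    and E: "\<forall>q\<in>S. (1+\<i>*q)*(\<Sum>c<n. Lc c * q^c) + (-(1+\<i>*q)/(q+\<i>))^(Suc n)*(q+\<i>)*(\<Sum>c<n. Rc c * q^c) = -((-(1+\<i>*q)/(q+\<i>)) * Z q)"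
    and cand: "\<forall>q\<in>S. poly LP q - (-(1+\<i>*q)/(q+\<i>))^n * poly RP q = Z q / (q+\<i>)"
  shows "(\<Sum>c<n. Lc c * q^c) = poly LP q \<and> (\<Sum>c<n. Rc c * q^c) = poly RP q"
proof -
  define PL where "PL = (\<Sum>c<n. monom (Lc c) c)"
  define PR where "PR = (\<Sum>c<n. monom (Rc c) c)"
  have "\<forall>q\<in>S. (q+\<i>)^n * poly (PL - LP) q = (-(1+\<i>*q))^n * poly (PR - RP) q"
  proof
    fix q assume q: "q \<in> S"
    then have qi: "q + \<i> \<noteq> 0" and qi2: "1 + \<i>*q \<noteq> 0" using Sgood by auto
    define s where "s = -(1+\<i>*q)/(q+\<i>)"
    define L where "L = (\<Sum>c<n. Lc c * q^c)"
    define R where "R = (\<Sum>c<n. Rc c * q^c)"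
    have h1: "(q+\<i>)^n * (L - (-(s * Z q))/(1+\<i>*q)) = (-(1+\<i>*q))^n * R"
      using bez_step[OF qi qi2, of L n R "-(s * Z q)"] E q unfolding s_def L_def R_def by simp
    have pr: "(q+\<i>)*(1+\<i>*q) = \<i> + \<i>*(q*q)" by (simp add: algebra_simps)
    have pr0: "\<i> + \<i>*(q*q) \<noteq> 0" using qi qi2 unfolding pr[symmetric] by simp
    have h2: "(-(s * Z q))/(1+\<i>*q) = Z q/(q+\<i>)" unfolding s_def using qi qi2 pr0 by (simp add: field_simps)
    have h3: "(q+\<i>)^n * s^n = (-(1+\<i>*q))^n"
    proof -
      have "(q+\<i>)*s = -(1+\<i>*q)" unfolding s_def using qi by (simp add: field_simps)
      then show ?thesis by (metis power_mult_distrib)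
    qed
    have h4: "(q+\<i>)^n * (poly LP q - Z q/(q+\<i>)) = (-(1+\<i>*q))^n * poly RP q"
    proof -
      have "poly LP q - Z q/(q+\<i>) = s^n * poly RP q" using cand q unfolding s_def by (simp add: algebra_simps)
      then have "(q+\<i>)^n * (poly LP q - Z q/(q+\<i>)) = ((q+\<i>)^n * s^n) * poly RP q" by simp
      then show ?thesis unfolding h3 .
    qed
    have "(q+\<i>)^n * (L - poly LP q) = (q+\<i>)^n * (L - Z q/(q+\<i>)) - (q+\<i>)^n * (poly LP q - Z q/(q+\<i>))"
      by (simp add: algebra_simps)
    also have "\<dots> = (-(1+\<i>*q))^n * R - (-(1+\<i>*q))^n * poly RP q" using h1[unfolded h2] h4 by simp
    also have "\<dots> = (-(1+\<i>*q))^n * (R - poly RP q)" by (simp add: algebra_simps)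
    finally show "(q+\<i>)^n * poly (PL - LP) q = (-(1+\<i>*q))^n * poly (PR - RP) q"
      unfolding PL_def PR_def poly_diff poly_of_sum L_def R_def .
  qed
  moreover have "degree (PL - LP) < n" unfolding PL_def by (rule degree_diff_less[OF degree_of_sum[OF n1] dL])
  moreover have "degree (PR - RP) < n" unfolding PR_def by (rule degree_diff_less[OF degree_of_sum[OF n1] dR])
  ultimately have "PL - LP = 0 \<and> PR - RP = 0" using bez_unique Sinf by blast
  then have "PL = LP" "PR = RP" by auto
  then show ?thesis using poly_of_sum[of Lc n q] poly_of_sum[of Rc n q] unfolding PL_def PR_def by simp
qed

definition L0P :: "nat \<Rightarrow> complex \<Rightarrow> complex poly" where
  "L0P n \<alpha> = Polynomial.smult (-\<i>/2) (geomP n ((1+\<alpha>*\<i>)/2) (\<i>*((1+\<alpha>*\<i>)/2)))"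
definition R0P :: "nat \<Rightarrow> complex \<Rightarrow> complex poly" where
  "R0P n \<alpha> = Polynomial.smult (\<i>*\<alpha>^(n-1)*(-\<i>/2)) (geomP n ((1+(-1/\<alpha>)*\<i>)/2) (-\<i>*((1+(-1/\<alpha>)*\<i>)/2)))"
definition L1P :: "nat \<Rightarrow> complex \<Rightarrow> complex poly" where
  "L1P n \<alpha> = Polynomial.smult (\<i>*(-\<i>/2)) (geomQ n (-\<i>*((1+(-\<alpha>)*\<i>)/2)) ((1+(-\<alpha>)*\<i>)/2))"
definition R1P :: "nat \<Rightarrow> complex \<Rightarrow> complex poly" where
  "R1P n \<alpha> = Polynomial.smult (\<alpha>^(n-1)*(-\<i>/2)) (geomQ n (\<i>*((1+(1/\<alpha>)*\<i>)/2)) ((1+(1/\<alpha>)*\<i>)/2))"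

lemma L0P_eval: "poly (L0P n \<alpha>) q = Fn n \<alpha> q"
proof -
  have ii: "\<i>*\<i> = (-1::complex)" by simp
  have e: "(1+\<alpha>*\<i>)/2 + \<i>*((1+\<alpha>*\<i>)/2)*q = (1 + q*\<i>)*(1+\<alpha>*\<i>)/2" by (simp add: field_simps)
  have "poly (L0P n \<alpha>) q = -(\<i>/2) * fpoly n ((1+\<alpha>*\<i>)/2 + \<i>*((1+\<alpha>*\<i>)/2)*q)"
    unfolding L0P_def by (simp only: poly_smult poly_geomP) simp
  also have "\<dots> = Fn n \<alpha> q" unfolding e Fn_def ..
  finally show ?thesis .
qed

lemma R0P_eval: "poly (R0P n \<alpha>) q = \<i>*\<alpha>^(n-1)*Fn n (-1/\<alpha>) (-q)"
proof -
  have ii: "\<i>*\<i> = (-1::complex)" by simp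
  have e0: "(1+x*\<i>)/2 + -\<i>*((1+x*\<i>)/2)*q = (1 + (-q)*\<i>)*(1+x*\<i>)/2" for x :: complex by (simp add: field_simps)
  have "poly (R0P n \<alpha>) q = \<i>*\<alpha>^(n-1)*(-(\<i>/2)) * fpoly n ((1+(-1/\<alpha>)*\<i>)/2 + -\<i>*((1+(-1/\<alpha>)*\<i>)/2)*q)"
    unfolding R0P_def by (simp only: poly_smult poly_geomP) simp
  also have "\<dots> = \<i>*\<alpha>^(n-1)*Fn n (-1/\<alpha>) (-q)" unfolding e0 Fn_def by (simp only: mult.assoc)
  finally show ?thesis .
qed

lemma L1P_eval: "q \<noteq> 0 \<Longrightarrow> poly (L1P n \<alpha>) q = \<i>*q^(n-1)*Fn n (-\<alpha>) (-1/q)"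
proof -
  assume q: "q \<noteq> 0"
  have e0: "(-\<i>*((1+x*\<i>)/2) + ((1+x*\<i>)/2)*q)/q = (1 + (-1/q)*\<i>)*(1+x*\<i>)/2" for x :: complex
    using q by (simp add: field_simps)
  have "poly (L1P n \<alpha>) q = \<i>*(-\<i>/2) * (q^(n-1) * fpoly n ((-\<i>*((1+(-\<alpha>)*\<i>)/2) + ((1+(-\<alpha>)*\<i>)/2)*q)/q))"
    unfolding L1P_def by (simp only: poly_smult poly_geomQ[OF q])
  also have "\<dots> = \<i>*(-\<i>/2) * (q^(n-1) * fpoly n ((1 + (-1/q)*\<i>)*(1+(-\<alpha>)*\<i>)/2))"
    unfolding e0 ..
  also have "\<dots> = \<i>*q^(n-1)*Fn n (-\<alpha>) (-1/q)" unfolding Fn_def by (simp only: mult_ac minus_divide_left)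
  finally show ?thesis .
qed

lemma R1P_eval: "q \<noteq> 0 \<Longrightarrow> poly (R1P n \<alpha>) q = \<alpha>^(n-1)*q^(n-1)*Fn n (1/\<alpha>) (1/q)"
proof -
  assume q: "q \<noteq> 0"
  have e0: "(\<i>*((1+x*\<i>)/2) + ((1+x*\<i>)/2)*q)/q = (1 + (1/q)*\<i>)*(1+x*\<i>)/2" for x :: complex
    using q by (simp add: field_simps)
  have "poly (R1P n \<alpha>) q = \<alpha>^(n-1)*(-\<i>/2) * (q^(n-1) * fpoly n ((\<i>*((1+(1/\<alpha>)*\<i>)/2) + ((1+(1/\<alpha>)*\<i>)/2)*q)/q))"
    unfolding R1P_def by (simp only: poly_smult poly_geomQ[OF q])
  also have "\<dots> = \<alpha>^(n-1)*(-\<i>/2) * (q^(n-1) * fpoly n ((1 + (1/q)*\<i>)*(1+(1/\<alpha>)*\<i>)/2))"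
    unfolding e0 ..
  also have "\<dots> = \<alpha>^(n-1)*q^(n-1)*Fn n (1/\<alpha>) (1/q)" unfolding Fn_def by (simp only: mult_ac minus_divide_left)
  finally show ?thesis .
qed

lemma degs: assumes "1 \<le> n" shows "degree (L0P n \<alpha>) < n \<and> degree (R0P n \<alpha>) < n \<and> degree (L1P n \<alpha>) < n \<and> degree (R1P n \<alpha>) < n"
  unfolding L0P_def R0P_def L1P_def R1P_def
  using le_less_trans[OF Polynomial.degree_smult_le degree_geomP[OF assms]]
    le_less_trans[OF Polynomial.degree_smult_le degree_geomQ[OF assms]] by blast

lemma corners:
  assumes n1: "1 \<le> n" and a0: "\<alpha> \<noteq> 0"
  shows "(\<Sum>c<n. (\<Sum>j<n. \<alpha>^j * Gi n j 0 0 c) * q^c) = Fn n \<alpha> q"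
    and "(\<Sum>c<n. (\<Sum>j<n. \<alpha>^j * Gi n j 0 n c) * q^c) = \<i>*\<alpha>^(n-1)*Fn n (-1/\<alpha>) (-q)"
    and "q \<noteq> 0 \<Longrightarrow> (\<Sum>c<n. (\<Sum>j<n. \<alpha>^j * Gi n j n 0 c) * q^c) = \<i>*q^(n-1)*Fn n (-\<alpha>) (-1/q)"
    and "q \<noteq> 0 \<Longrightarrow> (\<Sum>c<n. (\<Sum>j<n. \<alpha>^j * Gi n j n n c) * q^c) = \<alpha>^(n-1)*q^(n-1)*Fn n (1/\<alpha>) (1/q)"
proof -
  define S where "S = UNIV - ({0, \<i>, -\<i>} \<union> {q. (1+\<i>*\<alpha>)*q + (\<i>+\<alpha>) = 0})"
  have fin: "finite {q. (1+\<i>*\<alpha>)*q + (\<i>+\<alpha>) = 0}"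
  proof (rule finite_lin)
    show "1+\<i>*\<alpha> \<noteq> 0 \<or> \<i>+\<alpha> \<noteq> 0"
    proof (cases "1+\<i>*\<alpha> = 0")
      case True
      then have "\<i>*(1+\<i>*\<alpha>) = 0" by simp
      then have "\<alpha> = \<i>" by (simp add: algebra_simps)
      then show ?thesis by simp
    qed simp
  qed
  have Sinf: "infinite S" unfolding S_def by (rule infinite_cofinite) (use fin in simp)
  have Sgood: "q + \<i> \<noteq> 0 \<and> 1 + \<i>*q \<noteq> 0 \<and> q \<noteq> 0 \<and> q + \<i> + \<alpha> + \<i>*\<alpha>*q \<noteq> 0" if "q \<in> S" for q
  proof -
    have xm: "q \<noteq> -\<i>" and xp: "q \<noteq> \<i>" and q0: "q \<noteq> 0" and N: "(1+\<i>*\<alpha>)*q + (\<i>+\<alpha>) \<noteq> 0"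
      using that unfolding S_def by auto
    have xi: "q + \<i> \<noteq> 0" using xm by (metis add_eq_0_iff2)
    have "1 + \<i>*q = \<i>*(q - \<i>)" by (simp add: algebra_simps)
    then have xi2: "1 + \<i>*q \<noteq> 0" using xp by simp
    have "(1+\<i>*\<alpha>)*q + (\<i>+\<alpha>) = q + \<i> + \<alpha> + \<i>*\<alpha>*q" by (simp add: algebra_simps)
    then have "q + \<i> + \<alpha> + \<i>*\<alpha>*q \<noteq> 0" using N by metis
    then show ?thesis using xi xi2 q0 by simp
  qed
  have E: "\<forall>q\<in>S. (1+\<i>*q)*(\<Sum>c<n. (\<Sum>j<n. \<alpha>^j * Gi n j k0 0 c) * q^c)
       + (-(1+\<i>*q)/(q+\<i>))^(Suc n)*(q+\<i>)*(\<Sum>c<n. (\<Sum>j<n. \<alpha>^j * Gi n j k0 n c) * q^c)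
       = -((-(1+\<i>*q)/(q+\<i>)) * (q^k0 * fpoly n (\<alpha>*(-(1+\<i>*q)/(q+\<i>)))))" if k0: "k0 < Suc n" for k0
  proof
    fix q assume q: "q \<in> S"
    define s where "s = -(1+\<i>*q)/(q+\<i>)"
    have Cs: "Cq s q = 0" unfolding s_def by (rule Cq_s) (use Sgood[OF q] in simp)
    have "s * (q^k0 * fpoly n (\<alpha>*s)) = (\<Sum>a<Suc n. \<Sum>c<n. (\<Sum>j<n. \<alpha>^j * Gi n j k0 a c) * s^a * q^c) * Cq s q
     - (1+\<i>*q)*(\<Sum>c<n. (\<Sum>j<n. \<alpha>^j * Gi n j k0 0 c) * q^c)
     - s^(Suc n)*(q+\<i>)*(\<Sum>c<n. (\<Sum>j<n. \<alpha>^j * Gi n j k0 n c) * q^c)"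
      by (rule row_eq[OF n1 k0])
    note eq = this
    show "(1+\<i>*q)*(\<Sum>c<n. (\<Sum>j<n. \<alpha>^j * Gi n j k0 0 c) * q^c)
       + (-(1+\<i>*q)/(q+\<i>))^(Suc n)*(q+\<i>)*(\<Sum>c<n. (\<Sum>j<n. \<alpha>^j * Gi n j k0 n c) * q^c)
       = -((-(1+\<i>*q)/(q+\<i>)) * (q^k0 * fpoly n (\<alpha>*(-(1+\<i>*q)/(q+\<i>)))))"
    proof -
      have lin: "B + C = -X" if "(X::complex) = V*0 - B - C" for X V B C unfolding that by (simp add: algebra_simps)
      show ?thesis using lin[OF eq[unfolded Cs]] unfolding s_def .
    qed
  qed
  have bot: "(\<Sum>c<n. (\<Sum>j<n. \<alpha>^j * Gi n j 0 0 c) * q^c) = poly (L0P n \<alpha>) q \<and> (\<Sum>c<n. (\<Sum>j<n. \<alpha>^j * Gi n j 0 n c) * q^c) = poly (R0P n \<alpha>) q" for q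
  proof (rule row_ident[OF n1 _ _ Sinf _ E[of 0]])
    show "\<forall>q\<in>S. poly (L0P n \<alpha>) q - (-(1+\<i>*q)/(q+\<i>))^n * poly (R0P n \<alpha>) q = q^0 * fpoly n (\<alpha>*(-(1+\<i>*q)/(q+\<i>))) / (q+\<i>)"
      using cand_bot[OF n1 a0] Sgood unfolding L0P_eval R0P_eval by simp
  qed (use degs[OF n1] Sgood in auto)
  have top: "(\<Sum>c<n. (\<Sum>j<n. \<alpha>^j * Gi n j n 0 c) * q^c) = poly (L1P n \<alpha>) q \<and> (\<Sum>c<n. (\<Sum>j<n. \<alpha>^j * Gi n j n n c) * q^c) = poly (R1P n \<alpha>) q" for q
  proof (rule row_ident[OF n1 _ _ Sinf _ E[of n]])
    show "\<forall>q\<in>S. poly (L1P n \<alpha>) q - (-(1+\<i>*q)/(q+\<i>))^n * poly (R1P n \<alpha>) q = q^n * fpoly n (\<alpha>*(-(1+\<i>*q)/(q+\<i>))) / (q+\<i>)"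
    proof
      fix q assume "q \<in> S"
      then have g: "q + \<i> \<noteq> 0" "q \<noteq> 0" "q + \<i> + \<alpha> + \<i>*\<alpha>*q \<noteq> 0" using Sgood by auto
      show "poly (L1P n \<alpha>) q - (-(1+\<i>*q)/(q+\<i>))^n * poly (R1P n \<alpha>) q = q^n * fpoly n (\<alpha>*(-(1+\<i>*q)/(q+\<i>))) / (q+\<i>)"
        unfolding L1P_eval[OF g(2)] R1P_eval[OF g(2)] by (rule cand_top[OF n1 a0 g(2) g(1) g(3)])
    qed
  qed (use degs[OF n1] Sgood in auto)
  show "(\<Sum>c<n. (\<Sum>j<n. \<alpha>^j * Gi n j 0 0 c) * q^c) = Fn n \<alpha> q" using bot L0P_eval by simp
  show "(\<Sum>c<n. (\<Sum>j<n. \<alpha>^j * Gi n j 0 n c) * q^c) = \<i>*\<alpha>^(n-1)*Fn n (-1/\<alpha>) (-q)" using bot R0P_eval by simp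
  show "q \<noteq> 0 \<Longrightarrow> (\<Sum>c<n. (\<Sum>j<n. \<alpha>^j * Gi n j n 0 c) * q^c) = \<i>*q^(n-1)*Fn n (-\<alpha>) (-1/q)"
    using top L1P_eval by simp
  show "q \<noteq> 0 \<Longrightarrow> (\<Sum>c<n. (\<Sum>j<n. \<alpha>^j * Gi n j n n c) * q^c) = \<alpha>^(n-1)*q^(n-1)*Fn n (1/\<alpha>) (1/q)"
    using top R1P_eval by simp
qed



lemma final_alg:
  fixes G T U L0 R0 L1 R1 fA fB fC Pn Gn Qn w1 b2 p q \<alpha> \<gamma> Cw Cb :: complex
  assumes cw: "Cw \<noteq> 0" and cb: "Cb \<noteq> 0"
  and e1: "p*fA = T*Cb - (1+\<i>*q)*L0 - p*Pn*(q+\<i>)*R0"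
  and e2: "p*(Qn*fA) = U*Cb - (1+\<i>*q)*L1 - p*Pn*(q+\<i>)*R1"
  and e3: "\<gamma>*(fB*fC) = G*Cw - (1+\<i>*\<alpha>)*T - \<gamma>*Gn*(\<alpha>+\<i>)*U"
  shows "w1*b2*G = w1*\<gamma>*b2*fB*fC/Cw
     + (1+\<i>*\<alpha>)*((1+\<i>*q)*(L0*w1*b2) + p*(b2*w1*fA + (\<i>+q)*(w1*b2*Pn*R0)))/(Cw*Cb)
     + (\<i>+\<alpha>)*\<gamma>*(p*b2*Qn*w1*Gn*fA + (1+\<i>*q)*(w1*b2*Gn*L1) + p*(\<i>+q)*(w1*b2*Gn*Pn*R1))/(Cw*Cb)"
proof -
  have T: "T = (p*fA + (1+\<i>*q)*L0 + p*Pn*(q+\<i>)*R0)/Cb" using e1 cb by (simp add: field_simps)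
  have U: "U = (p*(Qn*fA) + (1+\<i>*q)*L1 + p*Pn*(q+\<i>)*R1)/Cb" using e2 cb by (simp add: field_simps)
  have G: "G = (\<gamma>*(fB*fC) + (1+\<i>*\<alpha>)*T + \<gamma>*Gn*(\<alpha>+\<i>)*U)/Cw" using e3 cw by (simp add: field_simps)
  show ?thesis unfolding G T U using cw cb by (simp add: field_simps)
qed

lemma full_eq:
  assumes n1: "1 \<le> n"
  shows "\<gamma> * (fpoly (Suc n) (\<alpha>*p) * fpoly n (\<gamma>*q)) =
     (\<Sum>j<n. \<Sum>k<Suc n. (\<Sum>a<Suc n. \<Sum>c<n. p^a * q^c * Gi n j k a c) * \<alpha>^j * \<gamma>^k) * Cq \<alpha> \<gamma>
     - (1+\<i>*\<alpha>)*(\<Sum>j<n. (\<Sum>a<Suc n. \<Sum>c<n. p^a * q^c * Gi n j 0 a c) * \<alpha>^j)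
     - \<gamma>^(Suc n)*(\<alpha>+\<i>)*(\<Sum>j<n. (\<Sum>a<Suc n. \<Sum>c<n. p^a * q^c * Gi n j n a c) * \<alpha>^j)"
proof -
  define u where "u j k = (\<Sum>a<Suc n. \<Sum>c<n. p^a * q^c * Gi n j k a c)" for j k
  have Ku: "(\<Sum>j<n. \<Sum>k<Suc n. Kf a c j k * u j k) = p^a * q^c" if a: "a < Suc n" and c: "c < n" for a c
  proof -
    have "(\<Sum>j<n. \<Sum>k<Suc n. Kf a c j k * u j k) = (\<Sum>j<n. \<Sum>k<Suc n. \<Sum>a'<Suc n. \<Sum>c'<n. p^a' * q^c' * (Kf a c j k * Gi n j k a' c'))"
      unfolding u_def by (simp add: sum_distrib_left mult_ac del: sum.lessThan_Suc)
    also have "\<dots> = (\<Sum>a'<Suc n. \<Sum>c'<n. \<Sum>j<n. \<Sum>k<Suc n. p^a' * q^c' * (Kf a c j k * Gi n j k a' c'))"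
      by (rule swap4)
    also have "\<dots> = (\<Sum>a'<Suc n. \<Sum>c'<n. p^a' * q^c' * (\<Sum>j<n. \<Sum>k<Suc n. Kf a c j k * Gi n j k a' c'))"
      by (simp add: sum_distrib_left del: sum.lessThan_Suc)
    also have "\<dots> = (\<Sum>a'<Suc n. \<Sum>c'<n. p^a' * q^c' * (if a = a' \<and> c = c' then 1 else 0))"
      using KG[OF n1 a c] by (intro sum.cong refl) simp
    also have "\<dots> = (\<Sum>a'<Suc n. \<Sum>c'<n. (if a' = a \<and> c' = c then 1 else 0) * (p^a' * q^c'))"
      by (intro sum.cong refl) auto
    also have "\<dots> = p^a * q^c" unfolding delta2 using a c by simp
    finally show ?thesis .
  qed
  have L: "\<gamma> * (\<Sum>a<Suc n. \<Sum>c<n. (\<Sum>j<n. \<Sum>k<Suc n. Kf a c j k * u j k) * \<alpha>^a * \<gamma>^c) = \<gamma> * (fpoly (Suc n) (\<alpha>*p) * fpoly n (\<gamma>*q))"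
  proof -
    have "(\<Sum>a<Suc n. \<Sum>c<n. (\<Sum>j<n. \<Sum>k<Suc n. Kf a c j k * u j k) * \<alpha>^a * \<gamma>^c) = (\<Sum>a<Suc n. \<Sum>c<n. (\<alpha>*p)^a * (\<gamma>*q)^c)"
    proof (intro sum.cong refl)
      fix a c assume "a \<in> {..<Suc n}" "c \<in> {..<n}"
      then have ac: "a < Suc n" "c < n" by auto
      show "(\<Sum>j<n. \<Sum>k<Suc n. Kf a c j k * u j k) * \<alpha>^a * \<gamma>^c = (\<alpha>*p)^a * (\<gamma>*q)^c"
        unfolding Ku[OF ac] by (simp add: power_mult_distrib mult_ac)
    qed
    also have "\<dots> = fpoly (Suc n) (\<alpha>*p) * fpoly n (\<gamma>*q)"
      unfolding fpoly_def by (simp add: sum_product del: sum.lessThan_Suc)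
    finally show ?thesis by simp
  qed
  have "\<gamma> * (fpoly (Suc n) (\<alpha>*p) * fpoly n (\<gamma>*q))
    = (\<Sum>j<n. \<Sum>k<Suc n. u j k * \<alpha>^j * \<gamma>^k) * Cq \<alpha> \<gamma> - (1+\<i>*\<alpha>)*(\<Sum>j<n. u j 0 * \<alpha>^j)
      - \<gamma>^(Suc n)*(\<alpha>+\<i>)*(\<Sum>j<n. u j n * \<alpha>^j)" using genB[OF n1, of \<gamma> u \<alpha>] unfolding L .
  then show ?thesis unfolding u_def .
qed



lemma pow_odd: "(x::complex)^(2*j+1) = x*(x^2)^j"
  by (simp add: power_mult)

lemma pow_even: "(x::complex)^(2*j) = (x^2)^j"
  by (simp add: power_mult)

lemma pow_odd': "1 \<le> n \<Longrightarrow> (x::complex)^(2*n-1) = x*(x^2)^(n-1)"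
proof -
  assume "1 \<le> n"
  then have "2*n-1 = 2*(n-1)+1" by simp
  then show ?thesis by (simp add: power_mult)
qed

lemma Gen_eq:
  "Gen n w1 w2 b1 b2 = w1*b2*(\<Sum>j<n. \<Sum>k<Suc n. (\<Sum>a<Suc n. \<Sum>c<n. (b1^2)^a * (b2^2)^c * Gi n j k a c) * (w1^2)^j * (w2^2)^k)"
proof -
  have "Gen n w1 w2 b1 b2 = (\<Sum>j<n. \<Sum>k<Suc n. \<Sum>a<Suc n. \<Sum>c<n.
      Kinv n (2*j+1, 2*k) (2*a, 2*c+1) * w1^(2*j+1) * w2^(2*k) * b1^(2*a) * b2^(2*c+1))"
    unfolding Gen_def sum_Wset sum_Bset by simp
  also have "\<dots> = (\<Sum>j<n. \<Sum>k<Suc n. \<Sum>a<Suc n. \<Sum>c<n.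
      w1*b2*((b1^2)^a * (b2^2)^c * Gi n j k a c * (w1^2)^j * (w2^2)^k))"
    unfolding pow_odd pow_even Gi_def by (simp only: mult_ac)
  also have "\<dots> = w1*b2*(\<Sum>j<n. \<Sum>k<Suc n. (\<Sum>a<Suc n. \<Sum>c<n. (b1^2)^a * (b2^2)^c * Gi n j k a c) * (w1^2)^j * (w2^2)^k)"
    by (simp add: sum_distrib_left sum_distrib_right del: sum.lessThan_Suc)
  finally show ?thesis .
qed

lemma TV: "(\<Sum>j<n. (\<Sum>a<Suc n. \<Sum>c<n. p^a * q^c * Gi n j k0 a c) * \<alpha>^j)
   = (\<Sum>a<Suc n. \<Sum>c<n. (\<Sum>j<n. \<alpha>^j * Gi n j k0 a c) * p^a * q^c)"
proof -
  have "(\<Sum>j<n. (\<Sum>a<Suc n. \<Sum>c<n. p^a * q^c * Gi n j k0 a c) * \<alpha>^j)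
     = (\<Sum>j<n. \<Sum>a<Suc n. \<Sum>c<n. \<alpha>^j * Gi n j k0 a c * p^a * q^c)"
    by (simp add: sum_distrib_left sum_distrib_right mult_ac del: sum.lessThan_Suc)
  also have "\<dots> = (\<Sum>a<Suc n. \<Sum>c<n. \<Sum>j<n. \<alpha>^j * Gi n j k0 a c * p^a * q^c)"
    by (rule swap3[symmetric])
  also have "\<dots> = (\<Sum>a<Suc n. \<Sum>c<n. (\<Sum>j<n. \<alpha>^j * Gi n j k0 a c) * p^a * q^c)"
    by (simp add: sum_distrib_right del: sum.lessThan_Suc)
  finally show ?thesis .
qed



theorem theorem1:
  fixes n :: nat and w1 w2 b1 b2 :: complex
  assumes "n \<ge> 1"
    and "w1 \<noteq> 0" and "b2 \<noteq> 0"
    and "Cpoly w1 w2 \<noteq> 0" and "Cpoly b1 b2 \<noteq> 0"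
  shows "Gen n w1 w2 b1 b2 =
      w1 * w2^2 * b2 * fpoly (n+1) (w1^2 * b1^2) * fpoly n (w2^2 * b2^2) / Cpoly w1 w2
    + (1 + \<i> * w1^2) *
        ((1 + \<i> * b2^2) * F00 n w1 w2 b1 b2
         + b1^2 * (b2 * w1 * fpoly n (b1^2 * w1^2) + (\<i> + b2^2) * F01 n w1 w2 b1 b2))
        / (Cpoly w1 w2 * Cpoly b1 b2)
    + (\<i> + w1^2) * w2^2 *
        (b1^2 * b2^(2*n+1) * w1 * w2^(2*n) * fpoly n (b1^2 * w1^2)
         + (1 + \<i> * b2^2) * F10 n w1 w2 b1 b2
         + b1^2 * (\<i> + b2^2) * F11 n w1 w2 b1 b2)
        / (Cpoly w1 w2 * Cpoly b1 b2)"
proof -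
  have n1: "1 \<le> n" using assms(1) .
  define \<alpha> where "\<alpha> = w1^2"
  define \<gamma> where "\<gamma> = w2^2"
  define p where "p = b1^2"
  define q where "q = b2^2"
  have a0: "\<alpha> \<noteq> 0" unfolding \<alpha>_def using assms(2) by simp
  have q0: "q \<noteq> 0" unfolding q_def using assms(3) by simp
  define G where "G = (\<Sum>j<n. \<Sum>k<Suc n. (\<Sum>a<Suc n. \<Sum>c<n. p^a * q^c * Gi n j k a c) * \<alpha>^j * \<gamma>^k)"
  define T where "T = (\<Sum>j<n. (\<Sum>a<Suc n. \<Sum>c<n. p^a * q^c * Gi n j 0 a c) * \<alpha>^j)"
  define U where "U = (\<Sum>j<n. (\<Sum>a<Suc n. \<Sum>c<n. p^a * q^c * Gi n j n a c) * \<alpha>^j)"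
  define L0 where "L0 = Fn n \<alpha> q"
  define R0 where "R0 = \<i>*\<alpha>^(n-1)*Fn n (-1/\<alpha>) (-q)"
  define L1 where "L1 = \<i>*q^(n-1)*Fn n (-\<alpha>) (-1/q)"
  define R1 where "R1 = \<alpha>^(n-1)*q^(n-1)*Fn n (1/\<alpha>) (1/q)"
  have hCw: "Cpoly w1 w2 = Cq \<alpha> \<gamma>" unfolding Cpoly_def Cq_def \<alpha>_def \<gamma>_def ..
  have hCb: "Cpoly b1 b2 = Cq p q" unfolding Cpoly_def Cq_def p_def q_def ..
  have cw: "Cq \<alpha> \<gamma> \<noteq> 0" using assms(4) hCw by simp
  have cb: "Cq p q \<noteq> 0" using assms(5) hCb by simp
  have e3: "\<gamma>*(fpoly (Suc n) (\<alpha>*p) * fpoly n (\<gamma>*q)) = G*Cq \<alpha> \<gamma> - (1+\<i>*\<alpha>)*T - \<gamma>*\<gamma>^n*(\<alpha>+\<i>)*U"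
    using full_eq[OF n1, of \<gamma> \<alpha> p q] unfolding G_def T_def U_def by simp
  have e1: "p*fpoly n (\<alpha>*p) = T*Cq p q - (1+\<i>*q)*L0 - p*p^n*(q+\<i>)*R0"
  proof -
    have "p * (q^0 * fpoly n (\<alpha>*p)) = (\<Sum>a<Suc n. \<Sum>c<n. (\<Sum>j<n. \<alpha>^j * Gi n j 0 a c) * p^a * q^c) * Cq p q
     - (1+\<i>*q)*(\<Sum>c<n. (\<Sum>j<n. \<alpha>^j * Gi n j 0 0 c) * q^c)
     - p^(Suc n)*(q+\<i>)*(\<Sum>c<n. (\<Sum>j<n. \<alpha>^j * Gi n j 0 n c) * q^c)"
      by (rule row_eq[OF n1]) simp
    then show ?thesis unfolding corners(1,2)[OF n1 a0] TV[symmetric] T_def[symmetric] L0_def R0_def by simp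
  qed
  have e2: "p*(q^n*fpoly n (\<alpha>*p)) = U*Cq p q - (1+\<i>*q)*L1 - p*p^n*(q+\<i>)*R1"
  proof -
    have "p * (q^n * fpoly n (\<alpha>*p)) = (\<Sum>a<Suc n. \<Sum>c<n. (\<Sum>j<n. \<alpha>^j * Gi n j n a c) * p^a * q^c) * Cq p q
     - (1+\<i>*q)*(\<Sum>c<n. (\<Sum>j<n. \<alpha>^j * Gi n j n 0 c) * q^c)
     - p^(Suc n)*(q+\<i>)*(\<Sum>c<n. (\<Sum>j<n. \<alpha>^j * Gi n j n n c) * q^c)"
      by (rule row_eq[OF n1]) simp
    then show ?thesis unfolding corners(3,4)[OF n1 a0 q0] TV[symmetric] U_def[symmetric] L1_def R1_def by simp
  qed
  have fin: "w1*b2*G = w1*\<gamma>*b2*fpoly (Suc n) (\<alpha>*p)*fpoly n (\<gamma>*q)/Cq \<alpha> \<gamma>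
     + (1+\<i>*\<alpha>)*((1+\<i>*q)*(L0*w1*b2) + p*(b2*w1*fpoly n (\<alpha>*p) + (\<i>+q)*(w1*b2*p^n*R0)))/(Cq \<alpha> \<gamma>*Cq p q)
     + (\<i>+\<alpha>)*\<gamma>*(p*b2*q^n*w1*\<gamma>^n*fpoly n (\<alpha>*p) + (1+\<i>*q)*(w1*b2*\<gamma>^n*L1) + p*(\<i>+q)*(w1*b2*\<gamma>^n*p^n*R1))/(Cq \<alpha> \<gamma>*Cq p q)"
    by (rule final_alg[OF cw cb e1 e2 e3])
  have hGen: "Gen n w1 w2 b1 b2 = w1*b2*G" unfolding Gen_eq G_def \<alpha>_def \<gamma>_def p_def q_def ..
  have hF00: "F00 n w1 w2 b1 b2 = L0*w1*b2" unfolding F00_def L0_def \<alpha>_def q_def ..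
  have hF01: "F01 n w1 w2 b1 b2 = w1*b2*p^n*R0"
    unfolding F01_def R0_def pow_odd'[OF n1] pow_even \<alpha>_def p_def q_def by (simp add: mult_ac)
  have hF10: "F10 n w1 w2 b1 b2 = w1*b2*\<gamma>^n*L1"
    unfolding F10_def L1_def pow_odd'[OF n1] pow_even \<alpha>_def \<gamma>_def q_def by (simp add: mult_ac)
  have hF11: "F11 n w1 w2 b1 b2 = w1*b2*\<gamma>^n*p^n*R1"
    unfolding F11_def R1_def pow_odd'[OF n1] pow_even \<alpha>_def \<gamma>_def p_def q_def by (simp add: mult_ac)
  have hb2: "b2^(2*n+1) = b2*q^n" unfolding q_def pow_odd ..
  have hw2: "w2^(2*n) = \<gamma>^n" unfolding \<gamma>_def pow_even ..
  have hpa: "b1^2 * w1^2 = \<alpha>*p" unfolding \<alpha>_def p_def by (simp add: mult.commute)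
  have hap: "w1^2 * b1^2 = \<alpha>*p" unfolding \<alpha>_def p_def ..
  have hgq: "w2^2 * b2^2 = \<gamma>*q" unfolding \<gamma>_def q_def ..
  show ?thesis
    unfolding hGen hF00 hF01 hF10 hF11 hCw hCb hb2 hw2 hpa hap hgq fin
    unfolding \<alpha>_def[symmetric] \<gamma>_def[symmetric] p_def[symmetric] q_def[symmetric]
    by (simp add: mult_ac)
qed

end
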